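(* In the $L^p$ setting of the context (with $1<p<\infty$), suppose $G$ is amenable (the action $\{\alpha_g\}$ being arbitrary). Then for every finite set $F\subset G$ and every family $a_g\in A$, $g\in F$, $$\Big\|\sum_{g\in F}a_gT_g\Big\|_{L(D)}\le\Big\|\sum_{g\in F}\bar a_gV_g\Big\|_{L(H)},$$ i.e. the map $B(\bar A,V_g)\to B(A,T_g)$ determined by $\bar a\mapsto a$, $V_g\mapsto T_g$ is norm decreasing.
   Context: Setting: $(\Omega,\mu)$ is a measure space with $\sigma$-additive $\sigma$-finite measure $\mu$, $E$ a Banach space, $G$ a discrete group, $\{\alpha_g\}_{g\in G}$ a group of invertible measurable maps $\Omega\to\Omega$ ($\alpha_{gh}=\alpha_g\circ\alpha_h$, $\alpha_e=\mathrm{id}$) such that $\alpha_g$ and $\alpha_g^{-1}$ preserve $\mu$-null sets. $D=L^p_\mu(\Omega,E)$; $A=L^\infty_\mu(\Omega,L(E))$ acts on $D$ by $(af)(x)=a(x)f(x)$; $(T_gf)(x)=\rho_g(x)^{1/p}f(\alpha_g^{-1}(x))$, where $\rho_g$ is the Radon–Nikodym derivative of the measure $\Delta\mapsto\mu(\alpha_g^{-1}(\Delta))$ with respect to $\mu$ (so $T_g$ is an isometry and $T_gaT_g^{-1}=\hat T_g(a)$ with $\hat T_g(a)(x)=a(\alpha_g^{-1}(x))$). $B(A,T_g)$ is the closed subalgebra of $L(D)$ generated by $A$ and the $T_g$. Regular representation: $H=l^p(G,D)$; $(V_{g_0}\xi)(g)=\xi(gg_0)$; $(\bar a\xi)(g)=\hat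 T_g(a)\xi(g)$; $B(\bar A,V_g)$ is the closed subalgebra of $L(H)$ generated by $\bar A=\{\bar a:a\in A\}$ and the $V_g$. *)

theory Defs
  imports "HOL-Analysis.Analysis"
begin

definition amenable_group :: "'g::group_add itself \<Rightarrow> bool" where
  "amenable_group _ \<longleftrightarrow>
     (\<exists>m :: ('g \<Rightarrow> real) \<Rightarrow> real.
        (\<forall>f h. bounded (range f) \<longrightarrow> bounded (range h) \<longrightarrow> m (\<lambda>x. f x + h x) = m f + m h) \<and>
        (\<forall>f c. bounded (range f) \<longrightarrow> m (\<lambda>x. c * f x) = c * m f) \<and>
        (\<forall>f. bounded (range f) \<longrightarrow> (\<forall>x. 0 \<le> f x) \<longrightarrow> 0 \<le> m f) \<and>
        m (\<lambda>_. 1) = 1 \<and>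
        (\<forall>f s. bounded (range f) \<longrightarrow> m (\<lambda>x. f (s + x)) = m f))"

definition memLp :: "'x measure \<Rightarrow> real \<Rightarrow> ('x \<Rightarrow> 'e::real_normed_vector) \<Rightarrow> bool" where
  "memLp M p f \<longleftrightarrow> f \<in> borel_measurable M \<and> integrable M (\<lambda>x. norm (f x) powr p)"

definition Lp_norm :: "'x measure \<Rightarrow> real \<Rightarrow> ('x \<Rightarrow> 'e::real_normed_vector) \<Rightarrow> real" where
  "Lp_norm M p f = (\<integral>x. norm (f x) powr p \<partial>M) powr (1 / p)"

definition Lp_opnorm :: "'x measure \<Rightarrow> real \<Rightarrow> (('x \<Rightarrow> 'e::real_normed_vector) \<Rightarrow> ('x \<Rightarrow> 'e)) \<Rightarrow> real" where
  "Lp_opnorm M p Op = (SUP f \<in> {f. memLp M p f \<and> Lp_norm M p f \<le> 1}. Lp_norm M p (Op f))"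

definition Linfty :: "'x measure \<Rightarrow> ('x \<Rightarrow> 'b::real_normed_vector) \<Rightarrow> bool" where
  "Linfty M a \<longleftrightarrow> a \<in> borel_measurable M \<and> (\<exists>C. AE x in M. norm (a x) \<le> C)"

definition mem_lpD :: "'x measure \<Rightarrow> real \<Rightarrow> ('g \<Rightarrow> 'x \<Rightarrow> 'e::real_normed_vector) \<Rightarrow> bool" where
  "mem_lpD M p \<xi> \<longleftrightarrow> (\<forall>g. memLp M p (\<xi> g)) \<and> (\<lambda>g. Lp_norm M p (\<xi> g) powr p) summable_on UNIV"

definition lpD_norm :: "'x measure \<Rightarrow> real \<Rightarrow> ('g \<Rightarrow> 'x \<Rightarrow> 'e::real_normed_vector) \<Rightarrow> real" where
  "lpD_norm M p \<xi> = (\<Sum>\<^sub>\<infinity>g. Lp_norm M p (\<xi> g) powr p) powr (1 / p)"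

definition lpD_opnorm :: "'x measure \<Rightarrow> real \<Rightarrow>
    (('g \<Rightarrow> 'x \<Rightarrow> 'e::real_normed_vector) \<Rightarrow> ('g \<Rightarrow> 'x \<Rightarrow> 'e)) \<Rightarrow> real" where
  "lpD_opnorm M p Op = (SUP \<xi> \<in> {\<xi>. mem_lpD M p \<xi> \<and> lpD_norm M p \<xi> \<le> 1}. lpD_norm M p (Op \<xi>))"

definition rho :: "'x measure \<Rightarrow> ('g \<Rightarrow> 'x \<Rightarrow> 'x) \<Rightarrow> 'g \<Rightarrow> 'x \<Rightarrow> real" where
  "rho M \<alpha> g x = enn2real (RN_deriv M (distr M M (\<alpha> g)) x)"

definition Top :: "'x measure \<Rightarrow> real \<Rightarrow> ('g::group_add \<Rightarrow> 'x \<Rightarrow> 'x) \<Rightarrow> 'g \<Rightarrow>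
    ('x \<Rightarrow> 'e::real_normed_vector) \<Rightarrow> 'x \<Rightarrow> 'e" where
  "Top M p \<alpha> g f = (\<lambda>x. rho M \<alpha> g x powr (1 / p) *\<^sub>R f (\<alpha> (- g) x))"

definition Mop :: "('x \<Rightarrow> ('e::real_normed_vector \<Rightarrow>\<^sub>L 'e)) \<Rightarrow> ('x \<Rightarrow> 'e) \<Rightarrow> 'x \<Rightarrow> 'e" where
  "Mop a f = (\<lambda>x. blinfun_apply (a x) (f x))"

definition Vop :: "'g::group_add \<Rightarrow> ('g \<Rightarrow> 'x \<Rightarrow> 'e) \<Rightarrow> 'g \<Rightarrow> 'x \<Rightarrow> 'e" where
  "Vop g0 \<xi> = (\<lambda>g. \<xi> (g + g0))"

definition bar_op :: "('g::group_add \<Rightarrow> 'x \<Rightarrow> 'x) \<Rightarrow> ('x \<Rightarrow> ('e::real_normed_vector \<Rightarrow>\<^sub>L 'e)) \<Rightarrow>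
    ('g \<Rightarrow> 'x \<Rightarrow> 'e) \<Rightarrow> 'g \<Rightarrow> 'x \<Rightarrow> 'e" where
  "bar_op \<alpha> a \<xi> = (\<lambda>g. Mop (\<lambda>x. a (\<alpha> (- g) x)) (\<xi> g))"

end

theory Submission
  imports Defs
begin



lemma right_mean:
  assumes "amenable_group TYPE('g)"
  obtains m :: "('g::group_add \<Rightarrow> real) \<Rightarrow> real" where
    "\<And>f h. bounded (range f) \<Longrightarrow> bounded (range h) \<Longrightarrow> m (\<lambda>x. f x + h x) = m f + m h"
    "\<And>f c. bounded (range f) \<Longrightarrow> m (\<lambda>x. c * f x) = c * m f"
    "\<And>f. bounded (range f) \<Longrightarrow> (\<forall>x. 0 \<le> f x) \<Longrightarrow> 0 \<le> m f"
    "m (\<lambda>_. 1) = 1"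
    "\<And>f s. bounded (range f) \<Longrightarrow> m (\<lambda>x. f (x + s)) = m f"
proof -
  obtain m0 :: "('g \<Rightarrow> real) \<Rightarrow> real" where H:
     "(\<forall>f h. bounded (range f) \<longrightarrow> bounded (range h) \<longrightarrow> m0 (\<lambda>x. f x + h x) = m0 f + m0 h) \<and>
        (\<forall>f c. bounded (range f) \<longrightarrow> m0 (\<lambda>x. c * f x) = c * m0 f) \<and>
        (\<forall>f. bounded (range f) \<longrightarrow> (\<forall>x. 0 \<le> f x) \<longrightarrow> 0 \<le> m0 f) \<and>
        m0 (\<lambda>_. 1) = 1 \<and>
        (\<forall>f s. bounded (range f) \<longrightarrow> m0 (\<lambda>x. f (s + x)) = m0 f)"
    using assms unfolding amenable_group_def by (elim exE) (rule that)
  have add: "\<And>f h. bounded (range f) \<Longrightarrow> bounded (range h) \<Longrightarrow> m0 (\<lambda>x. f x + h x) = m0 f + m0 h"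
    and mul: "\<And>f c. bounded (range f) \<Longrightarrow> m0 (\<lambda>x. c * f x) = c * m0 f"
    and pos: "\<And>f. bounded (range f) \<Longrightarrow> (\<forall>x. 0 \<le> f x) \<Longrightarrow> 0 \<le> m0 f"
    and one: "m0 (\<lambda>_. 1) = 1"
    and inv: "\<And>f s. bounded (range f) \<Longrightarrow> m0 (\<lambda>x. f (s + x)) = m0 f"
    using H by simp_all
  define m where "m f = m0 (\<lambda>x. f (- x))" for f
  have rb: "bounded (range (\<lambda>x. f (- x)))" if "bounded (range f)" for f :: "'g \<Rightarrow> real"
  proof (rule bounded_subset[OF that])
    show "range (\<lambda>x. f (- x)) \<subseteq> range f" by (auto intro: range_eqI)
  qed
  show ?thesis
  proof
    show "m (\<lambda>x. f x + h x) = m f + m h" if "bounded (range f)" "bounded (range h)" for f h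
      using add[OF rb[OF that(1)] rb[OF that(2)]] by (simp add: m_def)
    show "m (\<lambda>x. c * f x) = c * m f" if "bounded (range f)" for f c
      using mul[OF rb[OF that]] by (simp add: m_def)
    show "0 \<le> m f" if "bounded (range f)" "\<forall>x. 0 \<le> f x" for f
      using pos[OF rb[OF that(1)]] that(2) by (simp add: m_def)
    show "m (\<lambda>_. 1) = 1" using one by (simp add: m_def)
    show "m (\<lambda>x. f (x + s)) = m f" if "bounded (range f)" for f s
    proof -
      have "m0 (\<lambda>x. (\<lambda>y. f (- y)) (- s + x)) = m0 (\<lambda>y. f (- y))"
        by (rule inv[OF rb[OF that]])
      moreover have "(\<lambda>x. (\<lambda>y. f (- y)) (- s + x)) = (\<lambda>x. f (- x + s))"
        by (simp add: minus_add)
      ultimately show ?thesis by (simp add: m_def)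
    qed
  qed
qed

definition Qf :: "'g::group_add set \<Rightarrow> ('g \<times> 'g \<Rightarrow> real) \<Rightarrow> 'g \<Rightarrow> real" where
  "Qf F u y = (\<Sum>g\<in>F. u (g, y + - g) - u (g, y))"

lemma no_global_u:
  assumes am: "amenable_group TYPE('g::group_add)" and fin: "finite F" and r: "0 < r"
    and ub: "\<forall>z. \<bar>u z\<bar> \<le> 1" and q: "\<forall>y::'g. r \<le> Qf F u y"
  shows False
proof -
  obtain m :: "('g \<Rightarrow> real) \<Rightarrow> real" where
    add: "\<And>f h. bounded (range f) \<Longrightarrow> bounded (range h) \<Longrightarrow> m (\<lambda>x. f x + h x) = m f + m h"
    and mul: "\<And>f c. bounded (range f) \<Longrightarrow> m (\<lambda>x. c * f x) = c * m f"
    and pos: "\<And>f. bounded (range f) \<Longrightarrow> (\<forall>x. 0 \<le> f x) \<Longrightarrow> 0 \<le> m f"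
    and one: "m (\<lambda>_. 1) = 1"
    and inv: "\<And>f s. bounded (range f) \<Longrightarrow> m (\<lambda>x. f (x + s)) = m f"
    using right_mean[OF am] by blast
  have bd: "bounded (range f)" if "\<And>x. \<bar>f x\<bar> \<le> B" for f :: "'g \<Rightarrow> real" and B
    unfolding bounded_iff using that by (intro exI[of _ B]) auto
  have bsum: "bounded (range (\<lambda>x. \<Sum>g\<in>G. f g x))" if "finite G" "\<And>g. g \<in> G \<Longrightarrow> bounded (range (f g))"
    for G and f :: "'g \<Rightarrow> 'g \<Rightarrow> real"
    using that
  proof (induction G rule: finite_induct)
    case empty then show ?case by simp
  next
    case (insert a G)
    have "bounded (range (\<lambda>x. f a x + (\<Sum>g\<in>G. f g x)))"
      using insert by (intro bounded_plus_comp) auto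
    then show ?case using insert by simp
  qed
  have msum: "m (\<lambda>x. \<Sum>g\<in>G. f g x) = (\<Sum>g\<in>G. m (f g))"
    if "finite G" "\<And>g. g \<in> G \<Longrightarrow> bounded (range (f g))" for G and f :: "'g \<Rightarrow> 'g \<Rightarrow> real"
    using that
  proof (induction G rule: finite_induct)
    case empty
    have "m (\<lambda>x. 0 * 1) = 0 * m (\<lambda>_. 1)" by (rule mul) (simp add: bd)
    then show ?case by simp
  next
    case (insert a G)
    have "m (\<lambda>x. f a x + (\<Sum>g\<in>G. f g x)) = m (f a) + m (\<lambda>x. \<Sum>g\<in>G. f g x)"
      using insert by (intro add bsum) auto
    then show ?case using insert by simp
  qed
  have bu: "bounded (range (\<lambda>x. u (g, x + s)))" for g s
    using ub by (intro bd[of _ 1]) auto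
  have bu0: "bounded (range (\<lambda>x. u (g, x)))" for g
    using ub by (intro bd[of _ 1]) auto
  have mdiff: "m (\<lambda>x. f x - h x) = m f - m h" if "bounded (range f)" "bounded (range h)" for f h
  proof -
    have "bounded (range (\<lambda>x. (-1) * h x))" using that(2) unfolding bounded_iff by fastforce
    then have "m (\<lambda>x. f x + (-1) * h x) = m f + m (\<lambda>x. (-1) * h x)" using that by (intro add) auto
    also have "m (\<lambda>x. (-1) * h x) = - m h" using mul[OF that(2), of "-1"] by simp
    finally show ?thesis by simp
  qed
  have bterm: "bounded (range (\<lambda>x. u (g, x + - g) - u (g, x)))" for g
  proof (rule bd[of _ 2])
    fix x
    have "\<bar>u (g, x + - g)\<bar> \<le> 1" "\<bar>u (g, x)\<bar> \<le> 1" using ub by blast+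
    then show "\<bar>u (g, x + - g) - u (g, x)\<bar> \<le> 2" by linarith
  qed
  have "m (Qf F u) = (\<Sum>g\<in>F. m (\<lambda>x. u (g, x + - g) - u (g, x)))"
    unfolding Qf_def[abs_def] using fin bterm by (intro msum) auto
  also have "\<dots> = 0"
  proof (intro sum.neutral ballI)
    fix g
    have "m (\<lambda>x. u (g, x + - g) - u (g, x)) = m (\<lambda>x. u (g, x + - g)) - m (\<lambda>x. u (g, x))"
      by (rule mdiff[OF bu bu0])
    also have "m (\<lambda>x. u (g, x + - g)) = m (\<lambda>x. u (g, x))"
      using inv[OF bu0, of g "- g"] by simp
    finally show "m (\<lambda>x. u (g, x + - g) - u (g, x)) = 0" by simp
  qed
  finally have m0: "m (Qf F u) = 0" .
  have bQ: "bounded (range (Qf F u))"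
    unfolding Qf_def[abs_def] using fin bterm by (intro bsum) auto
  have bc: "bounded (range (\<lambda>x::'g. r * 1))" by (rule bd[of _ "\<bar>r\<bar>"]) simp
  have b1: "bounded (range (\<lambda>x::'g. 1::real))" by (rule bd[of _ 1]) simp
  have bQr: "bounded (range (\<lambda>x. Qf F u x - r * 1))"
    using bQ bc by (rule bounded_minus_comp)
  have "0 \<le> m (\<lambda>x. Qf F u x - r * 1)"
    using q by (intro pos[OF bQr]) simp
  also have "m (\<lambda>x. Qf F u x - r * 1) = m (Qf F u) - m (\<lambda>x. r * 1)"
    by (rule mdiff[OF bQ bc])
  also have "m (\<lambda>x. r * 1) = r * m (\<lambda>_. 1)" by (rule mul[OF b1])
  finally show False using m0 one r by simp
qed




lemma approx_sep:
  fixes K :: "('d \<Rightarrow> real) set" and D :: "'d set"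
  assumes finD: "finite D"
    and convex: "\<And>z w s. z \<in> K \<Longrightarrow> w \<in> K \<Longrightarrow> 0 \<le> s \<Longrightarrow> s \<le> 1 \<Longrightarrow> (\<lambda>d. w d + s * (z d - w d)) \<in> K"
    and ne: "K \<noteq> {}"
    and low: "\<And>z. z \<in> K \<Longrightarrow> \<gamma> \<le> (\<Sum>d\<in>D. z d * z d)"
    and gpos: "0 < \<gamma>"
    and bnd: "\<And>z d. z \<in> K \<Longrightarrow> d \<in> D \<Longrightarrow> \<bar>z d\<bar> \<le> B"
  shows "\<exists>w\<in>K. \<forall>z\<in>K. \<gamma> / 2 \<le> (\<Sum>d\<in>D. w d * z d)"
proof -
  define ip where "ip a b = (\<Sum>d\<in>D. a d * b d)" for a b :: "'d \<Rightarrow> real"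
  define J where "J = Inf ((\<lambda>z. ip z z) ` K)"
  have bdd: "bdd_below ((\<lambda>z. ip z z) ` K)"
    using low unfolding ip_def by (intro bdd_belowI[of _ \<gamma>]) auto
  have Jlow: "\<gamma> \<le> J" unfolding J_def
    using ne low by (intro cInf_greatest) (auto simp: ip_def)
  have JK: "J \<le> ip z z" if "z \<in> K" for z
    unfolding J_def using bdd that by (intro cInf_lower) auto
  define \<Lambda> where "\<Lambda> = real (card D) * (2 * B)^2 + 1"
  have Lpos: "0 < \<Lambda>" unfolding \<Lambda>_def by (simp add: add_nonneg_pos)
  have Lb: "ip (\<lambda>d. z d - w d) (\<lambda>d. z d - w d) \<le> \<Lambda>" if "z \<in> K" "w \<in> K" for z w
  proof -
    have "ip (\<lambda>d. z d - w d) (\<lambda>d. z d - w d) \<le> (\<Sum>d\<in>D. (2 * B)^2)"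
      unfolding ip_def
    proof (rule sum_mono)
      fix d assume d: "d \<in> D"
      have "\<bar>z d - w d\<bar> \<le> 2 * B" using bnd[OF that(1) d] bnd[OF that(2) d] by linarith
      then have "\<bar>z d - w d\<bar>^2 \<le> (2 * B)^2" by (intro power_mono) auto
      then show "(z d - w d) * (z d - w d) \<le> (2 * B)^2" by (simp add: power2_eq_square)
    qed
    then show ?thesis unfolding \<Lambda>_def by simp
  qed
  define s where "s = min 1 (\<gamma> / (2 * \<Lambda>))"
  have spos: "0 < s" and s1: "s \<le> 1" and sL: "s * \<Lambda> \<le> \<gamma> / 2"
    using gpos Lpos unfolding s_def by (auto simp: min_def field_simps)
  define \<eta> where "\<eta> = s * \<gamma> / 2"
  have etapos: "0 < \<eta>" unfolding \<eta>_def using spos gpos by simp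
  obtain w where wK: "w \<in> K" and ww: "ip w w < J + \<eta>"
  proof -
    have "Inf ((\<lambda>z. ip z z) ` K) < J + \<eta>" using etapos unfolding J_def by simp
    then obtain v where "v \<in> (\<lambda>z. ip z z) ` K" "v < J + \<eta>"
      using ne by (subst (asm) cInf_less_iff[OF _ bdd]) auto
    then show ?thesis using that by auto
  qed
  have "\<gamma> / 2 \<le> ip w z" if zK: "z \<in> K" for z
  proof -
    define v where "v = (\<lambda>d. w d + s * (z d - w d))"
    have vK: "v \<in> K" unfolding v_def using convex[OF zK wK] spos s1 by simp
    define e where "e = (\<lambda>d. z d - w d)"
    have "ip v v = (\<Sum>d\<in>D. w d * w d + 2 * s * (w d * e d) + s^2 * (e d * e d))"
      unfolding v_def ip_def e_def
      by (intro sum.cong) (auto simp: algebra_simps power2_eq_square)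
    also have "\<dots> = ip w w + 2 * s * ip w e + s^2 * ip e e"
      unfolding ip_def by (simp add: sum.distrib sum_distrib_left)
    finally have "ip v v = ip w w + 2 * s * ip w e + s^2 * ip e e" .
    moreover have "J \<le> ip v v" using JK[OF vK] .
    moreover have "ip e e \<le> \<Lambda>" unfolding e_def by (rule Lb[OF zK wK])
    ultimately have "J \<le> ip w w + 2 * s * ip w e + s^2 * \<Lambda>"
      using spos by (smt (verit) mult_left_mono zero_le_power2)
    then have "- \<eta> - s^2 * \<Lambda> \<le> 2 * s * ip w e" using ww by linarith
    then have "- \<eta> - s^2 * \<Lambda> \<le> s * (2 * ip w e)" by (simp add: algebra_simps)
    moreover have "- \<eta> - s^2 * \<Lambda> = s * (- \<gamma> / 2 - s * \<Lambda>)"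
      unfolding \<eta>_def by (simp add: algebra_simps power2_eq_square)
    ultimately have "s * (- \<gamma> / 2 - s * \<Lambda>) \<le> s * (2 * ip w e)" by simp
    then have "- \<gamma> / 2 - s * \<Lambda> \<le> 2 * ip w e" using spos by simp
    then have "- \<gamma> / 2 - \<gamma> / 2 \<le> 2 * ip w e" using sL by linarith
    moreover have "ip w e = ip w z - ip w w" unfolding ip_def e_def
      by (simp add: sum_subtractf algebra_simps)
    moreover have "\<gamma> \<le> ip w w" using Jlow JK[OF wK] by simp
    ultimately show ?thesis by linarith
  qed
  then show ?thesis using wK unfolding ip_def by blast
qed

definition Wset :: "'g::group_add set \<Rightarrow> 'g set \<Rightarrow> 'g set" where
  "Wset F Y = Y \<union> (\<lambda>(y, g). y + - g) ` (Y \<times> F)"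

lemma finite_Wset: "finite F \<Longrightarrow> finite Y \<Longrightarrow> finite (Wset F Y)"
  unfolding Wset_def by auto

lemma Y_sub_Wset: "Y \<subseteq> Wset F Y" unfolding Wset_def by auto

lemma diff_in_Wset: "y \<in> Y \<Longrightarrow> g \<in> F \<Longrightarrow> y - g \<in> Wset F Y"
  unfolding Wset_def by (auto intro!: image_eqI[of _ _ "(y, g)"])

lemma delta_pairing:
  fixes F Y :: "'g::group_add set"
  assumes finF: "finite F" and finY: "finite Y" and y: "y \<in> Y"
  shows "(\<Sum>d\<in>F \<times> Wset F Y. u d * ((if snd d + fst d = y then 1 else 0) - (if snd d = y then 1 else 0)))
         = Qf F u y"
proof -
  have "(\<Sum>d\<in>F \<times> Wset F Y. u d * ((if snd d + fst d = y then 1 else 0) - (if snd d = y then 1 else 0)))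
     = (\<Sum>g\<in>F. \<Sum>x\<in>Wset F Y. u (g, x) * ((if x + g = y then 1 else 0) - (if x = y then 1 else 0)))"
    by (simp add: sum.cartesian_product case_prod_beta)
  also have "\<dots> = (\<Sum>g\<in>F. u (g, y + - g) - u (g, y))"
  proof (rule sum.cong[OF refl])
    fix g assume g: "g \<in> F"
    have e: "(x + g = y) = (x = y - g)" for x by (auto simp: eq_diff_eq)
    have "(\<Sum>x\<in>Wset F Y. u (g, x) * ((if x + g = y then 1 else 0) - (if x = y then 1 else 0)))
        = (\<Sum>x\<in>Wset F Y. (if x = y - g then u (g, x) else 0)) - (\<Sum>x\<in>Wset F Y. (if x = y then u (g, x) else 0))"
      unfolding e sum_subtractf[symmetric] by (rule sum.cong) auto
    also have "\<dots> = u (g, y - g) - u (g, y)"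
      using diff_in_Wset[OF y g] Y_sub_Wset[of Y F] y finite_Wset[OF finF finY]
      by (simp add: sum.delta' subset_iff)
    finally show "(\<Sum>x\<in>Wset F Y. u (g, x) * ((if x + g = y then 1 else 0) - (if x = y then 1 else 0)))
        = u (g, y + - g) - u (g, y)" by simp
  qed
  finally show ?thesis unfolding Qf_def .
qed




definition Pset :: "'g set \<Rightarrow> ('g \<Rightarrow> real) set" where
  "Pset Y = {\<phi>. (\<forall>x. 0 \<le> \<phi> x) \<and> (\<forall>x. x \<notin> Y \<longrightarrow> \<phi> x = 0) \<and> sum \<phi> Y = 1}"

definition cphi :: "('g::group_add \<Rightarrow> real) \<Rightarrow> 'g \<times> 'g \<Rightarrow> real" where
  "cphi \<phi> d = \<phi> (snd d + fst d) - \<phi> (snd d)"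

lemma Pset_le1: "\<phi> \<in> Pset Y \<Longrightarrow> finite Y \<Longrightarrow> \<phi> x \<le> 1"
  unfolding Pset_def
  using member_le_sum[of x Y \<phi>] by (cases "x \<in> Y") auto

lemma finite_sep:
  fixes F Y :: "'g::group_add set"
  assumes finF: "finite F" and finY: "finite Y" and Yne: "Y \<noteq> {}" and r: "0 < r"
    and hyp: "\<And>\<phi>. \<phi> \<in> Pset Y \<Longrightarrow> 2 * r < (\<Sum>d\<in>F \<times> Wset F Y. \<bar>cphi \<phi> d\<bar>)"
  shows "\<exists>u. (\<forall>z. \<bar>u z\<bar> \<le> 1) \<and> (\<forall>y\<in>Y. r \<le> Qf F u y)"
proof -
  define D where "D = F \<times> Wset F Y"
  have finD: "finite D" unfolding D_def using finF finY finite_Wset by blast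
  define K where "K = {z. \<exists>\<phi> b. \<phi> \<in> Pset Y \<and> (\<Sum>d\<in>D. \<bar>b d\<bar>) \<le> r \<and> z = (\<lambda>d. cphi \<phi> d - b d)}"
  define dl where "dl y = (\<lambda>x::'g. if x = y then 1 else (0::real))" for y
  have dlP: "dl y \<in> Pset Y" if "y \<in> Y" for y
    using that finY unfolding Pset_def dl_def by (auto simp: sum.delta)
  obtain y0 where y0: "y0 \<in> Y" using Yne by blast
  have K0: "(\<lambda>d. cphi (dl y0) d - 0) \<in> K" unfolding K_def using dlP[OF y0] r by force
  have sumD_pos: "r < (\<Sum>d\<in>D. \<bar>z d\<bar>)" if zK: "z \<in> K" for z
  proof -
    obtain \<phi> b where \<phi>: "\<phi> \<in> Pset Y" and b: "(\<Sum>d\<in>D. \<bar>b d\<bar>) \<le> r" and z: "z = (\<lambda>d. cphi \<phi> d - b d)"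
      using zK unfolding K_def by blast
    have "(\<Sum>d\<in>D. \<bar>cphi \<phi> d\<bar>) \<le> (\<Sum>d\<in>D. \<bar>z d\<bar> + \<bar>b d\<bar>)"
      unfolding z by (intro sum_mono) linarith
    also have "\<dots> = (\<Sum>d\<in>D. \<bar>z d\<bar>) + (\<Sum>d\<in>D. \<bar>b d\<bar>)" by (simp add: sum.distrib)
    finally show ?thesis using hyp[OF \<phi>] b unfolding D_def by linarith
  qed
  have cardD: "0 < card D"
  proof -
    have "r < (\<Sum>d\<in>D. \<bar>cphi (dl y0) d - 0\<bar>)" using sumD_pos[OF K0] by simp
    then have "D \<noteq> {}" using r by auto
    then show ?thesis using finD by (simp add: card_gt_0_iff)
  qed
  define \<gamma> where "\<gamma> = r^2 / real (card D)"
  have gpos: "0 < \<gamma>" unfolding \<gamma>_def using r cardD by simp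
  have low: "\<gamma> \<le> (\<Sum>d\<in>D. z d * z d)" if "z \<in> K" for z
  proof -
    have "(\<Sum>d\<in>D. \<bar>z d\<bar> * 1)^2 \<le> (\<Sum>d\<in>D. \<bar>z d\<bar>^2) * (\<Sum>d\<in>D. 1^2)"
      by (rule Cauchy_Schwarz_ineq_sum)
    then have "(\<Sum>d\<in>D. \<bar>z d\<bar>)^2 \<le> (\<Sum>d\<in>D. z d * z d) * real (card D)"
      by (simp add: power2_eq_square)
    moreover have "r^2 \<le> (\<Sum>d\<in>D. \<bar>z d\<bar>)^2"
      using sumD_pos[OF that] r by (intro power_mono) auto
    ultimately have "r^2 \<le> (\<Sum>d\<in>D. z d * z d) * real (card D)" by linarith
    then show ?thesis unfolding \<gamma>_def using cardD by (simp add: divide_le_eq)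
  qed
  have bnd: "\<bar>z d\<bar> \<le> 2 + r" if "z \<in> K" "d \<in> D" for z d
  proof -
    obtain \<phi> b where \<phi>: "\<phi> \<in> Pset Y" and b: "(\<Sum>d\<in>D. \<bar>b d\<bar>) \<le> r" and z: "z = (\<lambda>d. cphi \<phi> d - b d)"
      using \<open>z \<in> K\<close> unfolding K_def by blast
    have "\<bar>b d\<bar> \<le> (\<Sum>d\<in>D. \<bar>b d\<bar>)" using finD that(2) by (intro member_le_sum) auto
    moreover have "0 \<le> \<phi> x" "\<phi> x \<le> 1" for x using \<phi> Pset_le1[OF \<phi> finY] unfolding Pset_def by auto
    ultimately show ?thesis unfolding z cphi_def using b
      by (smt (verit) \<open>\<And>x. 0 \<le> \<phi> x\<close> \<open>\<And>x. \<phi> x \<le> 1\<close>)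
  qed
  have convex: "(\<lambda>d. w d + s * (z d - w d)) \<in> K"
    if "z \<in> K" "w \<in> K" "0 \<le> s" "s \<le> 1" for z w s
  proof -
    obtain \<phi>1 b1 where \<phi>1: "\<phi>1 \<in> Pset Y" and b1: "(\<Sum>d\<in>D. \<bar>b1 d\<bar>) \<le> r" and z: "z = (\<lambda>d. cphi \<phi>1 d - b1 d)"
      using \<open>z \<in> K\<close> unfolding K_def by blast
    obtain \<phi>2 b2 where \<phi>2: "\<phi>2 \<in> Pset Y" and b2: "(\<Sum>d\<in>D. \<bar>b2 d\<bar>) \<le> r" and w: "w = (\<lambda>d. cphi \<phi>2 d - b2 d)"
      using \<open>w \<in> K\<close> unfolding K_def by blast
    define \<phi> where "\<phi> x = (1 - s) * \<phi>2 x + s * \<phi>1 x" for x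
    define b where "b d = (1 - s) * b2 d + s * b1 d" for d
    have "\<phi> \<in> Pset Y"
    proof -
      have p1: "\<forall>x. 0 \<le> \<phi>1 x" "\<forall>x. x \<notin> Y \<longrightarrow> \<phi>1 x = 0" "sum \<phi>1 Y = 1"
        using \<phi>1 unfolding Pset_def by auto
      have p2: "\<forall>x. 0 \<le> \<phi>2 x" "\<forall>x. x \<notin> Y \<longrightarrow> \<phi>2 x = 0" "sum \<phi>2 Y = 1"
        using \<phi>2 unfolding Pset_def by auto
      have "0 \<le> \<phi> x" for x unfolding \<phi>_def using p1 p2 that(3,4) by simp
      moreover have "x \<notin> Y \<Longrightarrow> \<phi> x = 0" for x unfolding \<phi>_def using p1 p2 by simp
      moreover have "sum \<phi> Y = (1 - s) * sum \<phi>2 Y + s * sum \<phi>1 Y"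
        unfolding \<phi>_def by (simp add: sum.distrib sum_distrib_left)
      ultimately show ?thesis unfolding Pset_def using p1 p2 by simp
    qed
    moreover have "(\<Sum>d\<in>D. \<bar>b d\<bar>) \<le> r"
    proof -
      have "(\<Sum>d\<in>D. \<bar>b d\<bar>) \<le> (\<Sum>d\<in>D. (1 - s) * \<bar>b2 d\<bar> + s * \<bar>b1 d\<bar>)"
      proof (intro sum_mono)
        fix d
        have "\<bar>(1 - s) * b2 d + s * b1 d\<bar> \<le> \<bar>(1 - s) * b2 d\<bar> + \<bar>s * b1 d\<bar>"
          by (rule abs_triangle_ineq)
        also have "\<dots> = (1 - s) * \<bar>b2 d\<bar> + s * \<bar>b1 d\<bar>"
          using that(3,4) by (simp add: abs_mult)
        finally show "\<bar>b d\<bar> \<le> (1 - s) * \<bar>b2 d\<bar> + s * \<bar>b1 d\<bar>" unfolding b_def .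
      qed
      also have "\<dots> = (1 - s) * (\<Sum>d\<in>D. \<bar>b2 d\<bar>) + s * (\<Sum>d\<in>D. \<bar>b1 d\<bar>)"
        by (simp add: sum.distrib sum_distrib_left)
      also have "\<dots> \<le> (1 - s) * r + s * r"
        using b1 b2 that(3,4) by (intro add_mono mult_left_mono) auto
      finally show ?thesis by (simp add: algebra_simps)
    qed
    moreover have "(\<lambda>d. w d + s * (z d - w d)) = (\<lambda>d. cphi \<phi> d - b d)"
      unfolding z w cphi_def \<phi>_def b_def by (rule ext) (simp add: algebra_simps)
    ultimately show ?thesis unfolding K_def by blast
  qed
  obtain w where wK: "w \<in> K" and wsep: "\<And>z. z \<in> K \<Longrightarrow> \<gamma> / 2 \<le> (\<Sum>d\<in>D. w d * z d)"
  proof -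
    have "\<exists>w\<in>K. \<forall>z\<in>K. \<gamma> / 2 \<le> (\<Sum>d\<in>D. w d * z d)"
      apply (rule approx_sep[where K=K and D=D and \<gamma>=\<gamma> and B="2 + r"])
           apply (rule finD)
          apply (rule convex; assumption)
         apply (use K0 in blast)
        apply (erule low)
       apply (rule gpos)
      apply (erule (1) bnd)
      done
    then show ?thesis using that by blast
  qed
  define \<mu> where "\<mu> = Max ((\<lambda>d. \<bar>w d\<bar>) ` D)"
  have wmu: "\<bar>w d\<bar> \<le> \<mu>" if "d \<in> D" for d
    unfolding \<mu>_def using finD that by (intro Max_ge) auto
  obtain dm where dm: "dm \<in> D" "\<mu> = \<bar>w dm\<bar>"
    unfolding \<mu>_def using finD cardD Max_in[of "(\<lambda>d. \<bar>w d\<bar>) ` D"] by fastforce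
  have mupos: "0 < \<mu>"
  proof (rule ccontr)
    assume "\<not> 0 < \<mu>"
    then have "w d = 0" if "d \<in> D" for d using wmu[OF that] by simp
    then have "(\<Sum>d\<in>D. w d * w d) = 0" by simp
    then show False using low[OF wK] gpos by simp
  qed
  define u where "u d = (if d \<in> D then w d / \<mu> else 0)" for d
  have ub: "\<forall>z. \<bar>u z\<bar> \<le> 1" using wmu mupos unfolding u_def by (auto simp: divide_le_eq_1)
  have "r \<le> Qf F u y" if y: "y \<in> Y" for y
  proof -
    have keyz: "r * \<bar>w d\<bar> < (\<Sum>d\<in>D. w d * cphi (dl y) d)" if d: "d \<in> D" for d
    proof -
      have "\<sigma> * r * w d < (\<Sum>d\<in>D. w d * cphi (dl y) d)" if \<sigma>: "\<bar>\<sigma>\<bar> = 1" for \<sigma>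
      proof -
        define b where "b d' = (if d' = d then \<sigma> * r else 0)" for d'
        have "(\<Sum>d\<in>D. \<bar>b d\<bar>) = \<bar>\<sigma> * r\<bar>" unfolding b_def using finD d
          by (simp add: if_distrib sum.delta cong: if_cong)
        also have "\<dots> = r" using \<sigma> r by (simp add: abs_mult)
        finally have "(\<lambda>d. cphi (dl y) d - b d) \<in> K" unfolding K_def using dlP[OF y] by force
        then have "\<gamma> / 2 \<le> (\<Sum>d'\<in>D. w d' * (cphi (dl y) d' - b d'))" by (rule wsep)
        also have "\<dots> = (\<Sum>d'\<in>D. w d' * cphi (dl y) d') - (\<Sum>d'\<in>D. w d' * b d')"
          by (simp add: right_diff_distrib sum_subtractf)
        also have "(\<Sum>d'\<in>D. w d' * b d') = \<sigma> * r * w d"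
          unfolding b_def using finD d by (simp add: if_distrib sum.delta cong: if_cong)
        finally show ?thesis using gpos by linarith
      qed
      from this[of 1] this[of "-1"] show ?thesis by (cases "0 \<le> w d") auto
    qed
    have "r * \<mu> \<le> (\<Sum>d\<in>D. w d * cphi (dl y) d)" using keyz[OF dm(1)] dm(2) by simp
    then have "r \<le> (\<Sum>d\<in>D. w d * cphi (dl y) d) / \<mu>" using mupos by (simp add: le_divide_eq)
    also have "\<dots> = (\<Sum>d\<in>D. u d * cphi (dl y) d)"
      unfolding u_def by (simp add: sum_divide_distrib)
    also have "\<dots> = Qf F u y"
      using delta_pairing[OF finF finY y, of u] unfolding D_def cphi_def dl_def by simp
    finally show ?thesis .
  qed
  then show ?thesis using ub by blast
qed




lemma compact_cube: "compact {u :: 'a \<Rightarrow> real. \<forall>z. u z \<in> {-1..1}}"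
proof -
  have "compactin (product_topology (\<lambda>_. euclidean) UNIV) (PiE UNIV (\<lambda>_::'a. {-1..1::real}))"
    by (simp add: compactin_PiE)
  then have "compact (PiE UNIV (\<lambda>_::'a. {-1..1::real}))"
    by (simp add: euclidean_product_topology)
  moreover have "PiE UNIV (\<lambda>_::'a. {-1..1::real}) = {u. \<forall>z. u z \<in> {-1..1}}"
    by (auto simp: PiE_UNIV_domain)
  ultimately show ?thesis by simp
qed

lemma closed_Qf: "closed {u. r \<le> Qf F u y}"
proof (rule closed_Collect_le)
  show "continuous_on UNIV (\<lambda>u. r)" by (rule continuous_on_const)
  show "continuous_on UNIV (\<lambda>u. Qf F u y)"
    unfolding Qf_def by (intro continuous_intros continuous_on_product_coordinates)
qed

lemma reiter:
  fixes F :: "'g::group_add set"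
  assumes am: "amenable_group TYPE('g)" and finF: "finite F" and r: "0 < r"
  shows "\<exists>Y \<phi>. finite Y \<and> Y \<noteq> {} \<and> \<phi> \<in> Pset Y \<and> (\<Sum>d\<in>F \<times> Wset F Y. \<bar>cphi \<phi> d\<bar>) \<le> 2 * r"
proof (rule ccontr)
  assume "\<not> ?thesis"
  then have hyp: "\<And>Y \<phi>. finite Y \<Longrightarrow> Y \<noteq> {} \<Longrightarrow> \<phi> \<in> Pset Y \<Longrightarrow> 2 * r < (\<Sum>d\<in>F \<times> Wset F Y. \<bar>cphi \<phi> d\<bar>)"
    by (meson not_le)
  define U0 where "U0 = {u :: 'g \<times> 'g \<Rightarrow> real. \<forall>z. u z \<in> {-1..1}}"
  define C where "C y = {u. r \<le> Qf F u y}" for y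
  have "U0 \<inter> \<Inter>(range C) \<noteq> {}"
  proof (rule compact_fip[THEN iffD1, rule_format])
    show "compact U0" unfolding U0_def by (rule compact_cube)
    show "\<And>a. a \<in> range C \<Longrightarrow> closed a" unfolding C_def using closed_Qf by blast
    fix B assume B: "B \<subseteq> range C" "finite B"
    obtain Y' where Y': "finite Y'" "B = C ` Y'" using finite_subset_image[OF B(2) B(1)] by blast
    define Y where "Y = insert 0 Y'"
    have "finite Y" "Y \<noteq> {}" using Y' unfolding Y_def by auto
    from finite_sep[OF finF this r hyp[OF this]]
    obtain u where "\<forall>z. \<bar>u z\<bar> \<le> 1" "\<forall>y\<in>Y. r \<le> Qf F u y" by blast
    then have "u \<in> U0 \<inter> \<Inter>B" unfolding U0_def Y'(2) C_def Y_def by (auto simp: abs_le_iff)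
    then show "U0 \<inter> \<Inter>B \<noteq> {}" by blast
  qed
  then obtain u where "u \<in> U0" "\<And>y. u \<in> C y" by blast
  then have "\<forall>z. \<bar>u z\<bar> \<le> 1" "\<forall>y. r \<le> Qf F u y" unfolding U0_def C_def by (auto simp: abs_le_iff)
  then show False using no_global_u[OF am finF r] by blast
qed




definition Dq :: "'g::group_add set \<Rightarrow> 'g set \<Rightarrow> ('g \<Rightarrow> real) \<Rightarrow> real" where
  "Dq F W \<psi> = (\<Sum>d\<in>F \<times> W. \<bar>\<psi> (snd d + fst d) - \<psi> (snd d)\<bar>)"

definition ind :: "'g set \<Rightarrow> 'g \<Rightarrow> real" where
  "ind S x = (if x \<in> S then 1 else 0)"

lemma Dq_nonneg: "0 \<le> Dq F W \<psi>" unfolding Dq_def by (intro sum_nonneg) auto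

lemma layer_aux:
  fixes F Y W :: "'g::group_add set"
  assumes finY: "finite Y"
  shows "card (\<phi> ` Y - {0}) = n \<Longrightarrow> (\<forall>x. 0 \<le> \<phi> x) \<Longrightarrow> (\<forall>x. x \<notin> Y \<longrightarrow> \<phi> x = 0) \<Longrightarrow> 0 < sum \<phi> Y
    \<Longrightarrow> Dq F W \<phi> \<le> e * sum \<phi> Y \<Longrightarrow> (\<exists>S\<subseteq>Y. S \<noteq> {} \<and> Dq F W (ind S) \<le> e * card S)"
proof (induction n arbitrary: \<phi> rule: less_induct)
  case (less n \<phi>)
  note nn = less.prems(1) and pos = less.prems(2) and supp = less.prems(3)
    and spos = less.prems(4) and Dle = less.prems(5)
  define P where "P = {x\<in>Y. 0 < \<phi> x}"
  have PY: "P \<subseteq> Y" and finP: "finite P" unfolding P_def using finY by auto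
  have zero_out: "\<phi> x = 0" if "x \<notin> P" for x
    using that pos supp unfolding P_def by (metis less_eq_real_def mem_Collect_eq)
  have Pne: "P \<noteq> {}"
  proof
    assume "P = {}"
    then have "sum \<phi> Y = 0" using zero_out by simp
    then show False using spos by simp
  qed
  define t where "t = Min (\<phi> ` P)"
  have tin: "t \<in> \<phi> ` P" unfolding t_def using finP Pne by (intro Min_in) auto
  have tpos: "0 < t" using tin unfolding P_def by auto
  have tle: "t \<le> \<phi> x" if "x \<in> P" for x unfolding t_def using finP that by (intro Min_le) auto
  define \<psi> where "\<psi> x = \<phi> x - t * ind P x" for x
  have \<psi>pos: "\<forall>x. 0 \<le> \<psi> x" unfolding \<psi>_def ind_def using tle pos by auto
  have \<psi>supp: "\<forall>x. x \<notin> Y \<longrightarrow> \<psi> x = 0" unfolding \<psi>_def ind_def using supp PY by auto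
  have pw: "\<bar>\<phi> a - \<phi> b\<bar> = t * \<bar>ind P a - ind P b\<bar> + \<bar>\<psi> a - \<psi> b\<bar>" for a b
  proof (cases "a \<in> P"; cases "b \<in> P")
    assume "a \<in> P" "b \<in> P" then show ?thesis unfolding \<psi>_def ind_def by simp
  next
    assume "a \<in> P" "b \<notin> P"
    then show ?thesis unfolding \<psi>_def ind_def using zero_out[of b] tle[of a] tpos by simp
  next
    assume "a \<notin> P" "b \<in> P"
    then show ?thesis unfolding \<psi>_def ind_def using zero_out[of a] tle[of b] tpos by simp
  next
    assume "a \<notin> P" "b \<notin> P"
    then show ?thesis unfolding \<psi>_def ind_def using zero_out[of a] zero_out[of b] by simp
  qed
  have Dsplit: "Dq F W \<phi> = t * Dq F W (ind P) + Dq F W \<psi>"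
    unfolding Dq_def pw by (simp add: sum.distrib sum_distrib_left)
  have sumind: "sum (ind P) Y = real (card P)"
  proof -
    have "sum (ind P) Y = (\<Sum>x\<in>Y. of_bool (x \<in> P))" unfolding ind_def by (intro sum.cong) auto
    also have "\<dots> = real (card (Y \<inter> {x. x \<in> P}))" using finY by simp
    also have "Y \<inter> {x. x \<in> P} = P" using PY by auto
    finally show ?thesis .
  qed
  have ssplit: "sum \<phi> Y = t * real (card P) + sum \<psi> Y"
    unfolding \<psi>_def using sumind by (simp add: sum_subtractf sum_distrib_left[symmetric])
  show ?case
  proof (cases "Dq F W (ind P) \<le> e * real (card P)")
    case True
    then show ?thesis using PY Pne by blast
  next
    case False
    have m1: "t * (e * real (card P)) < t * Dq F W (ind P)"
      using False tpos by (intro mult_strict_left_mono) auto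
    have m2: "e * (t * real (card P) + sum \<psi> Y) = t * (e * real (card P)) + e * sum \<psi> Y"
      by (simp add: algebra_simps)
    have m3: "e * sum \<phi> Y = t * (e * real (card P)) + e * sum \<psi> Y"
      using ssplit m2 by simp
    have "Dq F W \<psi> < e * sum \<psi> Y"
      using Dsplit Dle m1 m3 by linarith
    moreover have "0 \<le> sum \<psi> Y" using \<psi>pos by (simp add: sum_nonneg)
    ultimately have \<psi>spos: "0 < sum \<psi> Y" using Dq_nonneg[of F W \<psi>]
      by (cases "sum \<psi> Y = 0") auto
    have sub: "\<psi> ` Y - {0} \<subseteq> (\<lambda>v. v - t) ` (\<phi> ` Y - {0, t})"
    proof
      fix v assume "v \<in> \<psi> ` Y - {0}"
      then obtain x where x: "x \<in> Y" "v = \<psi> x" "\<psi> x \<noteq> 0" by auto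
      have xP: "x \<in> P" using x(3) zero_out[of x] unfolding \<psi>_def ind_def by (cases "x \<in> P") auto
      then have "\<psi> x = \<phi> x - t" unfolding \<psi>_def ind_def by simp
      moreover have "\<phi> x \<noteq> 0" using xP unfolding P_def by simp
      moreover have "\<phi> x \<noteq> t" using x(3) \<open>\<psi> x = \<phi> x - t\<close> by simp
      ultimately show "v \<in> (\<lambda>v. v - t) ` (\<phi> ` Y - {0, t})" using x by auto
    qed
    have "card (\<psi> ` Y - {0}) \<le> card ((\<lambda>v. v - t) ` (\<phi> ` Y - {0, t}))"
      using finY by (intro card_mono[OF _ sub]) auto
    also have "\<dots> \<le> card (\<phi> ` Y - {0, t})" using finY by (intro card_image_le) auto
    also have "\<dots> < card (\<phi> ` Y - {0})"
    proof (rule psubset_card_mono)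
      show "finite (\<phi> ` Y - {0})" using finY by auto
      have "t \<in> \<phi> ` Y - {0}" using tin PY tpos by auto
      then show "\<phi> ` Y - {0, t} \<subset> \<phi> ` Y - {0}" by auto
    qed
    finally have lt: "card (\<psi> ` Y - {0}) < n" using nn by simp
    from less.IH[OF lt refl \<psi>pos \<psi>supp \<psi>spos] \<open>Dq F W \<psi> < e * sum \<psi> Y\<close>
    show ?thesis by simp
  qed
qed

lemma folner:
  fixes F :: "'g::group_add set"
  assumes am: "amenable_group TYPE('g)" and finF: "finite F" and e: "0 < e"
  shows "\<exists>S. finite S \<and> S \<noteq> {} \<and> (1 - e) * real (card S) \<le> real (card {h\<in>S. \<forall>g\<in>F. h + g \<in> S})"
proof -
  obtain Y \<phi> where Y: "finite Y" "Y \<noteq> {}" and \<phi>: "\<phi> \<in> Pset Y"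
    and R: "(\<Sum>d\<in>F \<times> Wset F Y. \<bar>cphi \<phi> d\<bar>) \<le> 2 * (e / 2)"
    using reiter[OF am finF, of "e / 2"] e by auto
  define W where "W = Wset F Y"
  have finW: "finite W" unfolding W_def using finF Y(1) by (rule finite_Wset)
  have YW: "Y \<subseteq> W" unfolding W_def by (rule Y_sub_Wset)
  have p: "\<forall>x. 0 \<le> \<phi> x" "\<forall>x. x \<notin> Y \<longrightarrow> \<phi> x = 0" "sum \<phi> Y = 1" using \<phi> unfolding Pset_def by auto
  have "Dq F W \<phi> \<le> e * sum \<phi> Y" using R p(3) unfolding Dq_def cphi_def W_def by simp
  from layer_aux[OF Y(1) refl p(1,2) _ this] p(3)
  obtain S where S: "S \<subseteq> Y" "S \<noteq> {}" "Dq F W (ind S) \<le> e * card S" by auto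
  have finS: "finite S" using S(1) Y(1) finite_subset by blast
  define I where "I = {h\<in>S. \<forall>g\<in>F. h + g \<in> S}"
  have "S - I = (\<Union>g\<in>F. {h\<in>S. h + g \<notin> S})" unfolding I_def by auto
  then have "card (S - I) \<le> (\<Sum>g\<in>F. card {h\<in>S. h + g \<notin> S})"
    using card_UN_le[OF finF] by simp
  then have "real (card (S - I)) \<le> (\<Sum>g\<in>F. real (card {h\<in>S. h + g \<notin> S}))"
    unfolding of_nat_sum[symmetric] of_nat_le_iff .
  also have "\<dots> \<le> (\<Sum>g\<in>F. \<Sum>x\<in>W. \<bar>ind S (x + g) - ind S x\<bar>)"
  proof (rule sum_mono)
    fix g assume "g \<in> F"
    have "real (card {h\<in>S. h + g \<notin> S}) = (\<Sum>x\<in>W. of_bool (x \<in> {h\<in>S. h + g \<notin> S}))"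
    proof -
      have "W \<inter> {x. x \<in> {h\<in>S. h + g \<notin> S}} = {h\<in>S. h + g \<notin> S}" using S(1) YW by auto
      then show ?thesis using finW by simp
    qed
    also have "\<dots> \<le> (\<Sum>x\<in>W. \<bar>ind S (x + g) - ind S x\<bar>)"
      by (intro sum_mono) (auto simp: ind_def)
    finally show "real (card {h\<in>S. h + g \<notin> S}) \<le> (\<Sum>x\<in>W. \<bar>ind S (x + g) - ind S x\<bar>)" .
  qed
  also have "\<dots> = Dq F W (ind S)" unfolding Dq_def by (simp add: sum.cartesian_product case_prod_beta)
  finally have "real (card (S - I)) \<le> e * card S" using S(3) by linarith
  moreover have "card S = card I + card (S - I)"
  proof -
    have IS: "I \<subseteq> S" unfolding I_def by auto
    then have finI: "finite I" using finS finite_subset by blast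
    have "card (S - I) = card S - card I" using card_Diff_subset[OF finI IS] .
    moreover have "card I \<le> card S" using card_mono[OF finS IS] .
    ultimately show ?thesis by simp
  qed
  ultimately have "(1 - e) * real (card S) \<le> real (card I)" by (simp add: algebra_simps)
  then show ?thesis using finS S(2) unfolding I_def by blast
qed



locale act =
  fixes M :: "'x measure" and \<alpha> :: "'g::group_add \<Rightarrow> 'x \<Rightarrow> 'x"
  assumes sf: "sigma_finite_measure M"
    and meas: "\<And>g. \<alpha> g \<in> measurable M M"
    and comp: "\<And>g h x. x \<in> space M \<Longrightarrow> \<alpha> (g + h) x = \<alpha> g (\<alpha> h x)"
    and zero: "\<And>x. x \<in> space M \<Longrightarrow> \<alpha> 0 x = x"
    and null: "\<And>g N. N \<in> null_sets M \<Longrightarrow> \<alpha> g -` N \<inter> space M \<in> null_sets M"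
begin

interpretation sigma_finite_measure M by (rule sf)

lemma sp: "x \<in> space M \<Longrightarrow> \<alpha> g x \<in> space M"
  using meas[of g] by (rule measurable_space)

lemma inv1: "x \<in> space M \<Longrightarrow> \<alpha> (- g) (\<alpha> g x) = x"
  using comp[of x "- g" g] zero[of x] by simp

lemma inv2: "x \<in> space M \<Longrightarrow> \<alpha> g (\<alpha> (- g) x) = x"
  using comp[of x g "- g"] zero[of x] by simp

lemma comp_neg: "x \<in> space M \<Longrightarrow> \<alpha> (- (h + g)) x = \<alpha> (- g) (\<alpha> (- h) x)"
  using comp[of x "- g" "- h"] by (simp add: minus_add)

definition nu :: "'g \<Rightarrow> 'x measure" where "nu g = distr M M (\<alpha> g)"

lemma sets_nu[simp]: "sets (nu g) = sets M" unfolding nu_def by simp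

lemma ac_nu: "absolutely_continuous M (nu g)"
  unfolding absolutely_continuous_def
proof
  fix N assume N: "N \<in> null_sets M"
  then have "N \<in> sets M" by auto
  then have "emeasure (nu g) N = emeasure M (\<alpha> g -` N \<inter> space M)"
    unfolding nu_def by (rule emeasure_distr[OF meas])
  also have "\<dots> = 0" using null[OF N] by auto
  finally show "N \<in> null_sets (nu g)" using \<open>N \<in> sets M\<close> by (auto simp: null_sets_def)
qed

lemma sf_nu: "sigma_finite_measure (nu g)"
proof -
  obtain A where A: "countable A" "A \<subseteq> sets M" "\<Union>A = space M" "\<forall>a\<in>A. emeasure M a \<noteq> \<infinity>"
    using sigma_finite_countable by blast
  define B where "B = (\<lambda>a. \<alpha> (- g) -` a \<inter> space M) ` A"
  show ?thesis
  proof (unfold_locales, intro exI[of _ B] conjI)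
    show "countable B" unfolding B_def using A(1) by simp
    show "B \<subseteq> sets (nu g)" unfolding B_def using A(2) meas[of "- g"] by auto
    show "\<Union>B = space (nu g)"
    proof
      show "\<Union>B \<subseteq> space (nu g)" unfolding B_def nu_def by auto
      show "space (nu g) \<subseteq> \<Union>B"
      proof
        fix x assume "x \<in> space (nu g)"
        then have x: "x \<in> space M" unfolding nu_def by simp
        then have "\<alpha> (- g) x \<in> \<Union>A" using A(3) sp by simp
        then obtain a where "a \<in> A" "\<alpha> (- g) x \<in> a" by blast
        then show "x \<in> \<Union>B" unfolding B_def using x by blast
      qed
    qed
    show "\<forall>b\<in>B. emeasure (nu g) b \<noteq> \<infinity>"
    proof
      fix b assume "b \<in> B"
      then obtain a where a: "a \<in> A" "b = \<alpha> (- g) -` a \<inter> space M" unfolding B_def by blast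
      have asets: "a \<in> sets M" using A(2) a(1) by blast
      have bsets: "b \<in> sets M" using a(2) measurable_sets[OF meas asets] by simp
      have "emeasure (nu g) b = emeasure M (\<alpha> g -` b \<inter> space M)"
        unfolding nu_def by (rule emeasure_distr[OF meas bsets])
      also have "\<alpha> g -` b \<inter> space M = a"
      proof
        show "\<alpha> g -` b \<inter> space M \<subseteq> a" using a(2) inv1 by auto
        show "a \<subseteq> \<alpha> g -` b \<inter> space M"
          using a(2) sets.sets_into_space[OF asets] inv1 sp by auto
      qed
      finally show "emeasure (nu g) b \<noteq> \<infinity>" using A(4) a(1) by simp
    qed
  qed
qed

definition RN :: "'g \<Rightarrow> 'x \<Rightarrow> ennreal" where "RN g = RN_deriv M (nu g)"

lemma RN_meas[measurable]: "RN g \<in> borel_measurable M" unfolding RN_def by simp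

lemma density_RN: "density M (RN g) = nu g"
  unfolding RN_def by (rule density_RN_deriv[OF ac_nu sets_nu])

lemma RN_fin: "AE x in M. RN g x \<noteq> \<infinity>"
  unfolding RN_def by (rule RN_deriv_finite[OF sf_nu ac_nu sets_nu])

lemma cov_nn:
  assumes G: "G \<in> borel_measurable M"
  shows "(\<integral>\<^sup>+x. RN g x * G (\<alpha> (- g) x) \<partial>M) = (\<integral>\<^sup>+x. G x \<partial>M)"
proof -
  have Gm: "(\<lambda>x. G (\<alpha> (- g) x)) \<in> borel_measurable M"
    using measurable_compose[OF meas G] .
  have "(\<integral>\<^sup>+x. RN g x * G (\<alpha> (- g) x) \<partial>M) = integral\<^sup>N (density M (RN g)) (\<lambda>x. G (\<alpha> (- g) x))"
    using Gm by (simp add: nn_integral_density)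
  also have "\<dots> = integral\<^sup>N (distr M M (\<alpha> g)) (\<lambda>x. G (\<alpha> (- g) x))"
    by (simp add: density_RN nu_def)
  also have "\<dots> = (\<integral>\<^sup>+x. G (\<alpha> (- g) (\<alpha> g x)) \<partial>M)"
    using Gm by (intro nn_integral_distr[OF meas]) simp
  also have "\<dots> = (\<integral>\<^sup>+x. G x \<partial>M)"
    by (intro nn_integral_cong) (simp add: inv1)
  finally show ?thesis .
qed

lemma AE_transport:
  assumes "AE y in M. P y"
  shows "AE x in M. P (\<alpha> g x)"
proof -
  obtain N where N: "N \<in> null_sets M" "{y\<in>space M. \<not> P y} \<subseteq> N" using assms by (auto elim!: AE_E)
  show ?thesis
  proof (rule AE_I'[OF null[OF N(1), of g]])
    show "{x \<in> space M. \<not> P (\<alpha> g x)} \<subseteq> \<alpha> g -` N \<inter> space M" using N(2) sp by auto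
  qed
qed

lemma rho_eq: "rho M \<alpha> g = (\<lambda>x. enn2real (RN g x))"
  unfolding rho_def RN_def nu_def by simp

lemma rho_meas[measurable]: "rho M \<alpha> g \<in> borel_measurable M"
  unfolding rho_eq by measurable

lemma rho_nonneg: "0 \<le> rho M \<alpha> g x" unfolding rho_eq by simp

lemma rho_RN_AE: "AE x in M. ennreal (rho M \<alpha> g x) = RN g x"
  using RN_fin[of g] unfolding rho_eq by eventually_elim (simp add: ennreal_enn2real_if less_top)

lemma cov_real:
  fixes N :: "'x \<Rightarrow> real"
  assumes Nm: "N \<in> borel_measurable M" and Nnn: "\<And>x. 0 \<le> N x"
  shows "(\<integral>\<^sup>+x. ennreal (rho M \<alpha> g x * N (\<alpha> (- g) x)) \<partial>M) = (\<integral>\<^sup>+x. ennreal (N x) \<partial>M)"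
proof -
  have "(\<integral>\<^sup>+x. ennreal (rho M \<alpha> g x * N (\<alpha> (- g) x)) \<partial>M) = (\<integral>\<^sup>+x. RN g x * ennreal (N (\<alpha> (- g) x)) \<partial>M)"
  proof (rule nn_integral_cong_AE)
    show "AE x in M. ennreal (rho M \<alpha> g x * N (\<alpha> (- g) x)) = RN g x * ennreal (N (\<alpha> (- g) x))"
      using rho_RN_AE[of g] by eventually_elim (simp add: ennreal_mult rho_nonneg Nnn)
  qed
  also have "\<dots> = (\<integral>\<^sup>+x. ennreal (N x) \<partial>M)"
    using cov_nn[of "\<lambda>x. ennreal (N x)" g] Nm by simp
  finally show ?thesis .
qed

lemma cov_integrable:
  fixes N :: "'x \<Rightarrow> real"
  assumes Nm: "integrable M N" and Nnn: "\<And>x. 0 \<le> N x"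
  shows "integrable M (\<lambda>x. rho M \<alpha> g x * N (\<alpha> (- g) x))"
    and "(\<integral>x. rho M \<alpha> g x * N (\<alpha> (- g) x) \<partial>M) = (\<integral>x. N x \<partial>M)"
proof -
  have Nb: "N \<in> borel_measurable M" using Nm by auto
  have m: "(\<lambda>x. rho M \<alpha> g x * N (\<alpha> (- g) x)) \<in> borel_measurable M"
    using measurable_compose[OF meas Nb] by measurable
  have fin: "(\<integral>\<^sup>+x. ennreal (N x) \<partial>M) < \<infinity>"
    using Nm Nnn by (simp add: nn_integral_eq_integral less_top[symmetric])
  show "integrable M (\<lambda>x. rho M \<alpha> g x * N (\<alpha> (- g) x))"
    using m fin cov_real[OF Nb Nnn, of g] by (intro integrableI_nonneg) (auto simp: rho_nonneg Nnn)
  show "(\<integral>x. rho M \<alpha> g x * N (\<alpha> (- g) x) \<partial>M) = (\<integral>x. N x \<partial>M)"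
    using m Nb cov_real[OF Nb Nnn, of g] by (simp add: integral_eq_nn_integral rho_nonneg Nnn)
qed

end


lemma borel_measurable_scaleR_gen:
  fixes f :: "'a \<Rightarrow> 'e::real_normed_vector" and c :: "'a \<Rightarrow> real"
  assumes c[measurable]: "c \<in> borel_measurable M" and f: "f \<in> borel_measurable M"
  shows "(\<lambda>x. c x *\<^sub>R f x) \<in> borel_measurable M"
proof -
  define cn where "cn n x = real_of_int \<lfloor>c x * real (Suc n)\<rfloor> / real (Suc n)" for n x
  have const: "(\<lambda>x. a *\<^sub>R f x) \<in> borel_measurable M" for a
  proof -
    have "(\<lambda>v::'e. a *\<^sub>R v) \<in> borel_measurable borel"
      by (intro borel_measurable_continuous_onI continuous_intros)
    from measurable_compose[OF f this] show ?thesis .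
  qed
  have mn: "(\<lambda>x. cn n x *\<^sub>R f x) \<in> borel_measurable M" for n
  proof (rule measurable_piecewise_restrict2)
    define A where "A k = {x \<in> space M. \<lfloor>c x * real (Suc n)\<rfloor> = int_decode k}" for k
    show "\<And>k. A k \<in> sets M"
    proof -
      fix k
      have "A k = {x \<in> space M. real_of_int (int_decode k) \<le> c x * real (Suc n) \<and>
                    c x * real (Suc n) < real_of_int (int_decode k) + 1}"
        unfolding A_def by (simp add: floor_eq_iff)
      also have "\<dots> \<in> sets M" by measurable
      finally show "A k \<in> sets M" .
    qed
    show "space M = (\<Union>k. A k)"
    proof
      show "space M \<subseteq> (\<Union>k. A k)"
      proof
        fix x assume "x \<in> space M"
        then have "x \<in> A (int_encode \<lfloor>c x * real (Suc n)\<rfloor>)" unfolding A_def by simp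
        then show "x \<in> (\<Union>k. A k)" by blast
      qed
      show "(\<Union>k. A k) \<subseteq> space M" unfolding A_def by auto
    qed
    show "\<exists>h\<in>borel_measurable M. \<forall>x\<in>A k. cn n x *\<^sub>R f x = h x" for k
      by (intro bexI[OF _ const[of "real_of_int (int_decode k) / real (Suc n)"]])
        (simp add: A_def cn_def)
  qed
  show ?thesis
  proof (rule borel_measurable_LIMSEQ_metric[OF mn])
    fix x
    have lim: "(\<lambda>n. cn n x) \<longlonglongrightarrow> c x"
    proof (rule tendsto_sandwich[of "\<lambda>n. c x - inverse (real (Suc n))" _ _ "\<lambda>_. c x"])
      show "\<forall>\<^sub>F n in sequentially. c x - inverse (real (Suc n)) \<le> cn n x"
      proof (intro always_eventually allI)
        fix n
        have "c x * real (Suc n) - 1 \<le> real_of_int \<lfloor>c x * real (Suc n)\<rfloor>" by linarith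
        then have "(c x * real (Suc n) - 1) / real (Suc n) \<le> cn n x"
          unfolding cn_def by (intro divide_right_mono) auto
        then show "c x - inverse (real (Suc n)) \<le> cn n x"
          by (simp add: field_simps)
      qed
      show "\<forall>\<^sub>F n in sequentially. cn n x \<le> c x"
      proof (intro always_eventually allI)
        fix n
        have "real_of_int \<lfloor>c x * real (Suc n)\<rfloor> \<le> c x * real (Suc n)" by linarith
        then show "cn n x \<le> c x" unfolding cn_def by (simp add: divide_le_eq)
      qed
      show "(\<lambda>n. c x - inverse (real (Suc n))) \<longlonglongrightarrow> c x"
        using tendsto_diff[OF tendsto_const LIMSEQ_inverse_real_of_nat, of "c x"] by simp
      show "(\<lambda>n. c x) \<longlonglongrightarrow> c x" by simp
    qed
    show "(\<lambda>n. cn n x *\<^sub>R f x) \<longlonglongrightarrow> c x *\<^sub>R f x"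
      by (intro tendsto_scaleR lim tendsto_const)
  qed
qed

context act begin

interpretation sigma_finite_measure M by (rule sf)

lemma RN_cocycle: "AE x in M. RN (h + g) x = RN h x * RN g (\<alpha> (- h) x)"
proof -
  define f where "f x = RN h x * RN g (\<alpha> (- h) x)" for x
  have fm: "f \<in> borel_measurable M"
    unfolding f_def using measurable_compose[OF meas RN_meas[of g]] by measurable
  have "density M f = nu (h + g)"
  proof (rule measure_eqI)
    show "sets (density M f) = sets (nu (h + g))" by simp
    fix A assume "A \<in> sets (density M f)"
    then have A[measurable]: "A \<in> sets M" by simp
    have Am[measurable]: "(\<lambda>y. indicator A (\<alpha> h y) :: ennreal) \<in> borel_measurable M"
      using measurable_compose[OF meas[of h], of "indicator A"] by measurable
    have Gm: "(\<lambda>y. RN g y * indicator A (\<alpha> h y)) \<in> borel_measurable M" by measurable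
    have "emeasure (density M f) A = (\<integral>\<^sup>+x. f x * indicator A x \<partial>M)"
      by (rule emeasure_density[OF fm A])
    also have "\<dots> = (\<integral>\<^sup>+x. RN h x * (RN g (\<alpha> (- h) x) * indicator A (\<alpha> h (\<alpha> (- h) x))) \<partial>M)"
      by (intro nn_integral_cong) (simp add: f_def inv2 mult.assoc)
    also have "\<dots> = (\<integral>\<^sup>+y. RN g y * indicator A (\<alpha> h y) \<partial>M)"
      by (rule cov_nn[OF Gm])
    also have "\<dots> = integral\<^sup>N (density M (RN g)) (\<lambda>y. indicator A (\<alpha> h y))"
      using Am by (simp add: nn_integral_density)
    also have "\<dots> = integral\<^sup>N (distr M M (\<alpha> g)) (\<lambda>y. indicator A (\<alpha> h y))"
      by (simp add: density_RN nu_def)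
    also have "\<dots> = (\<integral>\<^sup>+z. indicator A (\<alpha> h (\<alpha> g z)) \<partial>M)"
      using Am by (intro nn_integral_distr[OF meas]) simp
    also have "\<dots> = (\<integral>\<^sup>+z. indicator (\<alpha> (h + g) -` A \<inter> space M) z \<partial>M)"
      by (intro nn_integral_cong) (auto simp: comp indicator_def)
    also have "\<dots> = emeasure M (\<alpha> (h + g) -` A \<inter> space M)"
      using measurable_sets[OF meas A] by simp
    also have "\<dots> = emeasure (nu (h + g)) A"
      unfolding nu_def by (rule emeasure_distr[OF meas A, symmetric])
    finally show "emeasure (density M f) A = emeasure (nu (h + g)) A" .
  qed
  from RN_deriv_unique[OF fm this] show ?thesis
    unfolding f_def RN_def by (auto elim: AE_mp)
qed

lemma rho_cocycle:
  "AE x in M. rho M \<alpha> (h + g) x = rho M \<alpha> h x * rho M \<alpha> g (\<alpha> (- h) x)"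
  using RN_cocycle[of h g] unfolding rho_eq by eventually_elim (simp add: enn2real_mult)

end


lemma Lp_norm_nonneg: "0 \<le> Lp_norm M p f"
  unfolding Lp_norm_def by simp

lemma Lp_norm_powr:
  assumes "0 < p"
  shows "Lp_norm M p f powr p = (\<integral>x. norm (f x) powr p \<partial>M)"
proof -
  have "0 \<le> (\<integral>x. norm (f x) powr p \<partial>M)" by (intro Bochner_Integration.integral_nonneg) auto
  then show ?thesis unfolding Lp_norm_def using assms by (simp add: powr_powr)
qed

lemma lpD_norm_nonneg: "0 \<le> lpD_norm M p \<xi>"
  unfolding lpD_norm_def by simp

lemma lpD_norm_powr:
  assumes "0 < p"
  shows "lpD_norm M p \<xi> powr p = (\<Sum>\<^sub>\<infinity>g. Lp_norm M p (\<xi> g) powr p)"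
proof -
  have "0 \<le> (\<Sum>\<^sub>\<infinity>g. Lp_norm M p (\<xi> g) powr p)" by (intro infsum_nonneg) auto
  then show ?thesis unfolding lpD_norm_def using assms by (simp add: powr_powr)
qed

lemma Lp_norm_zero: "0 < p \<Longrightarrow> Lp_norm M p (\<lambda>x. 0) = 0"
  unfolding Lp_norm_def by simp

lemma Lp_norm_cong: "(\<And>x. x \<in> space M \<Longrightarrow> f x = g x) \<Longrightarrow> Lp_norm M p f = Lp_norm M p g"
  unfolding Lp_norm_def by (metis (no_types, lifting) Bochner_Integration.integral_cong)

lemma fin_supp_infsum:
  fixes f :: "'a \<Rightarrow> real"
  assumes "finite A" "\<And>k. k \<notin> A \<Longrightarrow> f k = 0"
  shows "f summable_on UNIV" "infsum f UNIV = sum f A"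
proof -
  have "f summable_on A" using assms(1) by (rule summable_on_finite)
  then show "f summable_on UNIV"
    by (rule summable_on_cong_neutral[THEN iffD1, rotated -1]) (use assms(2) in auto)
  have "infsum f UNIV = infsum f A"
    by (rule infsum_cong_neutral) (use assms(2) in auto)
  also have "\<dots> = sum f A" using assms(1) by simp
  finally show "infsum f UNIV = sum f A" .
qed

lemma powr_le_one_imp:
  fixes x p :: real
  assumes "0 \<le> x" "0 < p" "x powr (1 / p) \<le> 1"
  shows "x \<le> 1"
proof (rule ccontr)
  assume "\<not> x \<le> 1"
  then have "1 < x" by simp
  then have "1 powr (1 / p) < x powr (1 / p)" using assms(2) by (intro powr_less_mono2) auto
  then have "1 < x powr (1 / p)" by simp
  then show False using assms(3) by simp
qed

lemma norm_scaleR_powr: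
  fixes v :: "'e::real_normed_vector"
  assumes "0 \<le> s" "0 < p"
  shows "norm (s *\<^sub>R v) powr p = s powr p * norm v powr p"
  using assms by (simp add: powr_mult)

lemma powr_inv_powr:
  fixes r p :: real
  assumes "0 \<le> r" "0 < p"
  shows "(r powr (1 / p)) powr p = r"
  using assms by (simp add: powr_powr)


definition Sop :: "'x measure \<Rightarrow> real \<Rightarrow> ('g::group_add \<Rightarrow> 'x \<Rightarrow> 'x) \<Rightarrow> 'g set \<Rightarrow>
    ('g \<Rightarrow> 'x \<Rightarrow> ('e::real_normed_vector \<Rightarrow>\<^sub>L 'e)) \<Rightarrow> ('x \<Rightarrow> 'e) \<Rightarrow> 'x \<Rightarrow> 'e" where
  "Sop M p \<alpha> F a f x = (\<Sum>g\<in>F. Mop (a g) (Top M p \<alpha> g f) x)"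

definition Phi :: "('g::group_add \<Rightarrow> 'x \<Rightarrow> 'x) \<Rightarrow> 'g set \<Rightarrow>
    ('g \<Rightarrow> 'x \<Rightarrow> ('e::real_normed_vector \<Rightarrow>\<^sub>L 'e)) \<Rightarrow> ('g \<Rightarrow> 'x \<Rightarrow> 'e) \<Rightarrow> 'g \<Rightarrow> 'x \<Rightarrow> 'e" where
  "Phi \<alpha> F a \<xi> h x = (\<Sum>g\<in>F. bar_op \<alpha> (a g) (Vop g \<xi>) h x)"

lemma Phi_eq: "Phi \<alpha> F a \<xi> h x = (\<Sum>g\<in>F. blinfun_apply (a g (\<alpha> (- h) x)) (\<xi> (h + g) x))"
  unfolding Phi_def bar_op_def Mop_def Vop_def by simp

definition xi :: "'x measure \<Rightarrow> real \<Rightarrow> ('g::group_add \<Rightarrow> 'x \<Rightarrow> 'x) \<Rightarrow> 'g set \<Rightarrow> 'x set \<Rightarrow>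
    ('x \<Rightarrow> 'e::real_normed_vector) \<Rightarrow> 'g \<Rightarrow> 'x \<Rightarrow> 'e" where
  "xi M p \<alpha> S Z f k x = (if k \<in> S then
     ((1 / real (card S) powr (1 / p)) * (if x \<in> Z then 0 else 1) * rho M \<alpha> k x powr (1 / p)) *\<^sub>R f (\<alpha> (- k) x)
     else 0)"

lemma cpowr: "0 < p \<Longrightarrow> (1 / real n powr (1 / p)) powr p = 1 / real n"
  by (simp add: powr_divide powr_powr)

lemma scal_powr:
  fixes p c i r :: real
  assumes p: "0 < p" and c: "0 \<le> c" and i: "i = 0 \<or> i = 1" and r: "0 \<le> r"
  shows "(c * i * r powr (1 / p)) powr p = c powr p * (i * r)"
proof -
  have "(c * i * r powr (1 / p)) powr p = c powr p * i powr p * (r powr (1 / p)) powr p"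
    using c i r by (auto simp: powr_mult)
  also have "(r powr (1 / p)) powr p = r" using r p by (simp add: powr_powr)
  also have "i powr p = i" using i p by auto
  finally show ?thesis by simp
qed

locale setting = act M \<alpha> for M :: "'x measure" and \<alpha> :: "'g::group_add \<Rightarrow> 'x \<Rightarrow> 'x" +
  fixes p :: real and F :: "'g set" and a :: "'g \<Rightarrow> 'x \<Rightarrow> ('e::banach \<Rightarrow>\<^sub>L 'e)"
  assumes p: "1 < p" and finF: "finite F" and Linf: "\<And>g. g \<in> F \<Longrightarrow> Linfty M (a g)"
begin

lemma p0: "0 < p" using p by simp

lemma xi_norm_powr:
  assumes k: "k \<in> S"
  shows "norm (xi M p \<alpha> S Z f k x) powr p
     = (1 / real (card S)) * ((if x \<in> Z then 0 else 1) * (rho M \<alpha> k x * norm (f (\<alpha> (- k) x)) powr p))"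
proof -
  define c where "c = 1 / real (card S) powr (1 / p)"
  define i where "i = (if x \<in> Z then 0 else 1 :: real)"
  have c0: "0 \<le> c" unfolding c_def by simp
  have i01: "i = 0 \<or> i = 1" unfolding i_def by simp
  have s0: "0 \<le> c * i * rho M \<alpha> k x powr (1 / p)" using c0 i01 by auto
  have "norm (xi M p \<alpha> S Z f k x) powr p = (c * i * rho M \<alpha> k x powr (1 / p)) powr p * norm (f (\<alpha> (- k) x)) powr p"
    unfolding xi_def c_def[symmetric] i_def[symmetric] using k norm_scaleR_powr[OF s0 p0] by simp
  also have "\<dots> = c powr p * (i * rho M \<alpha> k x) * norm (f (\<alpha> (- k) x)) powr p"
    using scal_powr[OF p0 c0 i01 rho_nonneg] by simp
  also have "c powr p = 1 / real (card S)" unfolding c_def by (rule cpowr[OF p0])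
  finally show ?thesis unfolding i_def by (simp add: mult.assoc)
qed

lemma xi_meas:
  assumes f: "f \<in> borel_measurable M" and Z: "Z \<in> sets M"
  shows "xi M p \<alpha> S Z f k \<in> borel_measurable M"
proof (cases "k \<in> S")
  case True
  have c: "(\<lambda>x. (1 / real (card S) powr (1 / p)) * (if x \<in> Z then 0 else 1) * rho M \<alpha> k x powr (1 / p)) \<in> borel_measurable M"
    using Z by measurable
  have fm: "(\<lambda>x. f (\<alpha> (- k) x)) \<in> borel_measurable M" using measurable_compose[OF meas f] .
  show ?thesis unfolding xi_def using True borel_measurable_scaleR_gen[OF c fm] by simp
next
  case False
  then show ?thesis unfolding xi_def by simp
qed

lemma xi_int:
  assumes f: "memLp M p f" and Z: "Z \<in> null_sets M" and k: "k \<in> S"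
  shows "integrable M (\<lambda>x. norm (xi M p \<alpha> S Z f k x) powr p)"
    and "(\<integral>x. norm (xi M p \<alpha> S Z f k x) powr p \<partial>M) = (1 / real (card S)) * (\<integral>x. norm (f x) powr p \<partial>M)"
proof -
  have fi: "integrable M (\<lambda>x. norm (f x) powr p)" using f unfolding memLp_def by simp
  note ci = cov_integrable[OF fi, of k, simplified]
  have Zs[measurable]: "Z \<in> sets M" using Z by auto
  have AEZ: "AE x in M. x \<notin> Z" using AE_not_in[OF Z] .
  have m1: "(\<lambda>x. rho M \<alpha> k x * norm (f (\<alpha> (- k) x)) powr p) \<in> borel_measurable M"
    using ci(1) by auto
  have "integrable M (\<lambda>x. (if x \<in> Z then 0 else 1) * (rho M \<alpha> k x * norm (f (\<alpha> (- k) x)) powr p))"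
  proof (rule integrable_cong_AE_imp[OF ci(1)])
    show "(\<lambda>x. (if x \<in> Z then 0 else 1) * (rho M \<alpha> k x * norm (f (\<alpha> (- k) x)) powr p)) \<in> borel_measurable M"
      using m1 by measurable
    show "AE x in M. rho M \<alpha> k x * norm (f (\<alpha> (- k) x)) powr p =
        (if x \<in> Z then 0 else 1) * (rho M \<alpha> k x * norm (f (\<alpha> (- k) x)) powr p)"
      using AEZ by eventually_elim simp
  qed
  then show "integrable M (\<lambda>x. norm (xi M p \<alpha> S Z f k x) powr p)"
    unfolding xi_norm_powr[OF k] by simp
  have "(\<integral>x. norm (xi M p \<alpha> S Z f k x) powr p \<partial>M)
     = (1 / real (card S)) * (\<integral>x. (if x \<in> Z then 0 else 1) * (rho M \<alpha> k x * norm (f (\<alpha> (- k) x)) powr p) \<partial>M)"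
    unfolding xi_norm_powr[OF k] by simp
  also have "(\<integral>x. (if x \<in> Z then 0 else 1) * (rho M \<alpha> k x * norm (f (\<alpha> (- k) x)) powr p) \<partial>M)
      = (\<integral>x. rho M \<alpha> k x * norm (f (\<alpha> (- k) x)) powr p \<partial>M)"
    using AEZ by (intro integral_cong_AE) (use m1 in auto)
  also have "\<dots> = (\<integral>x. norm (f x) powr p \<partial>M)" using ci(2) .
  finally show "(\<integral>x. norm (xi M p \<alpha> S Z f k x) powr p \<partial>M) = (1 / real (card S)) * (\<integral>x. norm (f x) powr p \<partial>M)" .
qed

lemma xi_lpD:
  assumes f: "memLp M p f" and Z: "Z \<in> null_sets M" and S: "finite S" "S \<noteq> {}"
  shows "mem_lpD M p (xi M p \<alpha> S Z f)"
    and "lpD_norm M p (xi M p \<alpha> S Z f) powr p = (\<integral>x. norm (f x) powr p \<partial>M)"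
proof -
  have fb: "f \<in> borel_measurable M" using f unfolding memLp_def by simp
  have Zs: "Z \<in> sets M" using Z by auto
  have L: "Lp_norm M p (xi M p \<alpha> S Z f k) powr p = (if k \<in> S then (1 / real (card S)) * (\<integral>x. norm (f x) powr p \<partial>M) else 0)" for k
  proof (cases "k \<in> S")
    case True
    then show ?thesis unfolding Lp_norm_powr[OF p0] using xi_int(2)[OF f Z True] by simp
  next
    case False
    then have "xi M p \<alpha> S Z f k = (\<lambda>x. 0)" unfolding xi_def by (simp add: fun_eq_iff)
    then show ?thesis using False Lp_norm_zero[OF p0] by simp
  qed
  have memk: "memLp M p (xi M p \<alpha> S Z f k)" for k
  proof (cases "k \<in> S")
    case True
    then show ?thesis unfolding memLp_def using xi_meas[OF fb Zs] xi_int(1)[OF f Z True] by simp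
  next
    case False
    then have "xi M p \<alpha> S Z f k = (\<lambda>x. 0)" unfolding xi_def by (simp add: fun_eq_iff)
    then show ?thesis unfolding memLp_def using p0 by simp
  qed
  have supp: "\<And>k. k \<notin> S \<Longrightarrow> Lp_norm M p (xi M p \<alpha> S Z f k) powr p = 0" using L by simp
  note fs = fin_supp_infsum[where f="\<lambda>k. Lp_norm M p (xi M p \<alpha> S Z f k) powr p", OF S(1) supp]
  show "mem_lpD M p (xi M p \<alpha> S Z f)" unfolding mem_lpD_def using memk fs(1) by simp
  have "lpD_norm M p (xi M p \<alpha> S Z f) powr p = (\<Sum>k\<in>S. Lp_norm M p (xi M p \<alpha> S Z f k) powr p)"
    unfolding lpD_norm_powr[OF p0] using fs(2) by simp
  also have "\<dots> = (\<Sum>k\<in>S. (1 / real (card S)) * (\<integral>x. norm (f x) powr p \<partial>M))" using L by simp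
  also have "\<dots> = (\<integral>x. norm (f x) powr p \<partial>M)" using S by simp
  finally show "lpD_norm M p (xi M p \<alpha> S Z f) powr p = (\<integral>x. norm (f x) powr p \<partial>M)" .
qed

end


context setting begin

lemma Phi_interior:
  assumes x: "x \<in> space M" and hI: "\<forall>g\<in>F. h + g \<in> S"
    and coc: "x \<notin> Z \<Longrightarrow> \<forall>g\<in>F. rho M \<alpha> (h + g) x = rho M \<alpha> h x * rho M \<alpha> g (\<alpha> (- h) x)"
  shows "Phi \<alpha> F a (xi M p \<alpha> S Z f) h x
    = ((1 / real (card S) powr (1 / p)) * (if x \<in> Z then 0 else 1) * rho M \<alpha> h x powr (1 / p))
        *\<^sub>R Sop M p \<alpha> F a f (\<alpha> (- h) x)"
proof (cases "x \<in> Z")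
  case True
  then show ?thesis unfolding Phi_eq xi_def using hI by simp
next
  case False
  define c where "c = 1 / real (card S) powr (1 / p)"
  define y where "y = \<alpha> (- h) x"
  have "Phi \<alpha> F a (xi M p \<alpha> S Z f) h x
      = (\<Sum>g\<in>F. (c * rho M \<alpha> h x powr (1 / p)) *\<^sub>R Mop (a g) (Top M p \<alpha> g f) y)"
    unfolding Phi_eq
  proof (rule sum.cong[OF refl])
    fix g assume g: "g \<in> F"
    have r: "rho M \<alpha> (h + g) x powr (1 / p) = rho M \<alpha> h x powr (1 / p) * rho M \<alpha> g y powr (1 / p)"
      using coc[OF False] g rho_nonneg unfolding y_def by (simp add: powr_mult)
    have "xi M p \<alpha> S Z f (h + g) x = (c * rho M \<alpha> h x powr (1 / p)) *\<^sub>R (rho M \<alpha> g y powr (1 / p) *\<^sub>R f (\<alpha> (- g) y))"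
      unfolding xi_def using hI g False r comp_neg[OF x, of h g] unfolding c_def y_def by (simp add: mult.assoc)
    then show "blinfun_apply (a g (\<alpha> (- h) x)) (xi M p \<alpha> S Z f (h + g) x)
        = (c * rho M \<alpha> h x powr (1 / p)) *\<^sub>R Mop (a g) (Top M p \<alpha> g f) y"
      unfolding Mop_def Top_def y_def by (simp add: blinfun.scaleR_right)
  qed
  also have "\<dots> = (c * rho M \<alpha> h x powr (1 / p)) *\<^sub>R Sop M p \<alpha> F a f y"
    unfolding Sop_def by (simp add: scaleR_sum_right)
  finally show ?thesis using False unfolding c_def y_def by simp
qed

lemma Phi_outside:
  assumes "\<forall>g\<in>F. h + g \<notin> S"
  shows "Phi \<alpha> F a (xi M p \<alpha> S Z f) h = (\<lambda>x. 0)"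
  unfolding Phi_eq[abs_def] xi_def using assms by simp

lemma lower_e:
  assumes f: "memLp M p f" and Nint: "integrable M (\<lambda>x. norm (Sop M p \<alpha> F a f x) powr p)"
    and S: "finite S" "S \<noteq> {}"
    and e: "(1 - e) * real (card S) \<le> real (card {h\<in>S. \<forall>g\<in>F. h + g \<in> S})"
  shows "\<exists>Z\<in>null_sets M. (1 - e) * (\<integral>x. norm (Sop M p \<alpha> F a f x) powr p \<partial>M)
            \<le> lpD_norm M p (Phi \<alpha> F a (xi M p \<alpha> S Z f)) powr p"
proof -
  define Nf where "Nf x = norm (Sop M p \<alpha> F a f x) powr p" for x
  have Nf0: "0 \<le> Nf x" for x unfolding Nf_def by simp
  have "AE x in M. \<forall>hg\<in>S \<times> F. rho M \<alpha> (fst hg + snd hg) x = rho M \<alpha> (fst hg) x * rho M \<alpha> (snd hg) (\<alpha> (- fst hg) x)"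
    using S(1) finF by (subst AE_finite_all) (auto intro: rho_cocycle)
  then obtain Z where Z: "Z \<in> null_sets M"
    and Zc: "{x\<in>space M. \<not> (\<forall>hg\<in>S \<times> F. rho M \<alpha> (fst hg + snd hg) x = rho M \<alpha> (fst hg) x * rho M \<alpha> (snd hg) (\<alpha> (- fst hg) x))} \<subseteq> Z"
    by (auto elim!: AE_E)
  define \<xi> where "\<xi> = xi M p \<alpha> S Z f"
  define I where "I = {h\<in>S. \<forall>g\<in>F. h + g \<in> S}"
  define L where "L h = Lp_norm M p (Phi \<alpha> F a \<xi> h) powr p" for h
  have L0: "0 \<le> L h" for h unfolding L_def by simp
  have Nfint: "0 \<le> (\<integral>x. Nf x \<partial>M)" using Nf0 by (simp add: Bochner_Integration.integral_nonneg)
  have LI: "L h = (1 / real (card S)) * (\<integral>x. Nf x \<partial>M)" if hI: "h \<in> I" for h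
  proof -
    have hS: "h \<in> S" and hg: "\<forall>g\<in>F. h + g \<in> S" using hI unfolding I_def by auto
    have pw: "norm (Phi \<alpha> F a \<xi> h x) powr p = (1 / real (card S)) * ((if x \<in> Z then 0 else 1) * (rho M \<alpha> h x * Nf (\<alpha> (- h) x)))"
      if x: "x \<in> space M" for x
    proof -
      have coc: "\<forall>g\<in>F. rho M \<alpha> (h + g) x = rho M \<alpha> h x * rho M \<alpha> g (\<alpha> (- h) x)" if "x \<notin> Z"
        using Zc x that hS by auto
      define c where "c = 1 / real (card S) powr (1 / p)"
      define i where "i = (if x \<in> Z then 0 else 1 :: real)"
      have c0: "0 \<le> c" unfolding c_def by simp
      have i01: "i = 0 \<or> i = 1" unfolding i_def by simp
      have s0: "0 \<le> c * i * rho M \<alpha> h x powr (1 / p)" using c0 i01 by auto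
      have eq: "Phi \<alpha> F a \<xi> h x = (c * i * rho M \<alpha> h x powr (1 / p)) *\<^sub>R Sop M p \<alpha> F a f (\<alpha> (- h) x)"
        unfolding \<xi>_def c_def i_def by (rule Phi_interior[OF x hg coc])
      have "norm (Phi \<alpha> F a \<xi> h x) powr p = (c * i * rho M \<alpha> h x powr (1 / p)) powr p * Nf (\<alpha> (- h) x)"
        unfolding eq Nf_def by (rule norm_scaleR_powr[OF s0 p0])
      also have "\<dots> = c powr p * (i * rho M \<alpha> h x) * Nf (\<alpha> (- h) x)"
        using scal_powr[OF p0 c0 i01 rho_nonneg] by simp
      also have "c powr p = 1 / real (card S)" unfolding c_def by (rule cpowr[OF p0])
      finally show ?thesis unfolding i_def by (simp add: mult.assoc)
    qed
    note ci = cov_integrable[OF Nint[folded Nf_def] Nf0, of h]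
    have m1: "(\<lambda>x. rho M \<alpha> h x * Nf (\<alpha> (- h) x)) \<in> borel_measurable M" using ci(1) by auto
    have Zs[measurable]: "Z \<in> sets M" using Z by auto
    have "L h = (\<integral>x. (1 / real (card S)) * ((if x \<in> Z then 0 else 1) * (rho M \<alpha> h x * Nf (\<alpha> (- h) x))) \<partial>M)"
      unfolding L_def Lp_norm_powr[OF p0] by (intro Bochner_Integration.integral_cong) (auto simp: pw)
    also have "\<dots> = (1 / real (card S)) * (\<integral>x. (if x \<in> Z then 0 else 1) * (rho M \<alpha> h x * Nf (\<alpha> (- h) x)) \<partial>M)"
      by simp
    also have "(\<integral>x. (if x \<in> Z then 0 else 1) * (rho M \<alpha> h x * Nf (\<alpha> (- h) x)) \<partial>M)
        = (\<integral>x. rho M \<alpha> h x * Nf (\<alpha> (- h) x) \<partial>M)"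
      using AE_not_in[OF Z] by (intro integral_cong_AE) (use m1 in auto)
    also have "\<dots> = (\<integral>x. Nf x \<partial>M)" using ci(2) .
    finally show ?thesis .
  qed
  define S' where "S' = (\<lambda>(s, g). s + - g) ` (S \<times> F)"
  have finS': "finite S'" unfolding S'_def using S(1) finF by auto
  have Lout: "L h = 0" if "h \<notin> S'" for h
  proof -
    have "\<forall>g\<in>F. h + g \<notin> S"
    proof (intro ballI notI)
      fix g assume "g \<in> F" "h + g \<in> S"
      then have "(h + g) + - g \<in> S'" unfolding S'_def by (intro image_eqI[of _ _ "(h + g, g)"]) auto
      then show False using that by (simp add: add.assoc)
    qed
    note po = Phi_outside[OF this, of Z f]
    show ?thesis unfolding L_def \<xi>_def po Lp_norm_zero[OF p0] using p0 by simp
  qed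
  note fs = fin_supp_infsum[where f=L, OF finS' Lout]
  show ?thesis
  proof (cases "F = {}")
    case True
    then have "Nf = (\<lambda>x. 0)" unfolding Nf_def Sop_def using p0 by (simp add: fun_eq_iff)
    then show ?thesis using Z lpD_norm_nonneg unfolding Nf_def[symmetric] by auto
  next
    case False
    have IS': "I \<subseteq> S'"
    proof
      fix h assume "h \<in> I"
      obtain g where g: "g \<in> F" using False by blast
      then have "h + g \<in> S" using \<open>h \<in> I\<close> unfolding I_def by auto
      then have "(h + g) + - g \<in> S'" unfolding S'_def using g by (intro image_eqI[of _ _ "(h + g, g)"]) auto
      then show "h \<in> S'" by (simp add: add.assoc)
    qed
    have "lpD_norm M p (Phi \<alpha> F a \<xi>) powr p = sum L S'"
      unfolding lpD_norm_powr[OF p0] L_def[symmetric] using fs(2) .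
    also have "sum L S' \<ge> sum L I" using finS' IS' L0 by (intro sum_mono2) auto
    also have "sum L I = real (card I) * ((1 / real (card S)) * (\<integral>x. Nf x \<partial>M))" using LI by simp
    finally have A: "real (card I) * ((1 / real (card S)) * (\<integral>x. Nf x \<partial>M)) \<le> lpD_norm M p (Phi \<alpha> F a \<xi>) powr p" .
    have cS: "0 < real (card S)" using S by (simp add: card_gt_0_iff)
    have "(1 - e) * (\<integral>x. Nf x \<partial>M) \<le> (real (card I) / real (card S)) * (\<integral>x. Nf x \<partial>M)"
    proof (rule mult_right_mono[OF _ Nfint])
      show "1 - e \<le> real (card I) / real (card S)" using e cS unfolding I_def by (simp add: le_divide_eq)
    qed
    also have "\<dots> = real (card I) * ((1 / real (card S)) * (\<integral>x. Nf x \<partial>M))" by simp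
    finally have "(1 - e) * (\<integral>x. Nf x \<partial>M) \<le> lpD_norm M p (Phi \<alpha> F a \<xi>) powr p" using A by linarith
    then show ?thesis using Z unfolding \<xi>_def Nf_def by blast
  qed
qed

end


lemma infsum_finsum:
  fixes f :: "'i \<Rightarrow> 'a \<Rightarrow> real"
  assumes "finite G" "\<And>g. g \<in> G \<Longrightarrow> f g summable_on A"
  shows "(\<lambda>x. \<Sum>g\<in>G. f g x) summable_on A \<and> infsum (\<lambda>x. \<Sum>g\<in>G. f g x) A = (\<Sum>g\<in>G. infsum (f g) A)"
  using assms
proof (induction G rule: finite_induct)
  case empty then show ?case by simp
next
  case (insert i G)
  then have IH: "(\<lambda>x. \<Sum>g\<in>G. f g x) summable_on A" "infsum (\<lambda>x. \<Sum>g\<in>G. f g x) A = (\<Sum>g\<in>G. infsum (f g) A)"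
    by auto
  have fi: "f i summable_on A" using insert by simp
  show ?case using insert(1,2) summable_on_add[OF fi IH(1)] infsum_add[OF fi IH(1)] IH(2) by simp
qed

lemma bij_plus_right': "bij_betw (\<lambda>h. h + g) UNIV (UNIV :: 'g::group_add set)"
  by (rule bij_betw_byWitness[of _ "\<lambda>h. h - g"]) auto

lemma max_powr_le_sum:
  fixes n :: "'i \<Rightarrow> real"
  assumes fin: "finite G" and ne: "G \<noteq> {}" and n0: "\<And>g. 0 \<le> n g" and p: "0 < p"
  shows "Max (n ` G) powr p \<le> (\<Sum>g\<in>G. n g powr p)"
proof -
  have "Max (n ` G) \<in> n ` G" using fin ne by (intro Max_in) auto
  then obtain g0 where g0: "g0 \<in> G" "Max (n ` G) = n g0" by auto
  show ?thesis unfolding g0(2) using fin g0(1) by (intro member_le_sum) auto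
qed

context setting begin

lemma Phi_bdd: "\<exists>B. \<forall>\<xi>. mem_lpD M p \<xi> \<longrightarrow> lpD_norm M p \<xi> \<le> 1 \<longrightarrow> lpD_norm M p (Phi \<alpha> F a \<xi>) \<le> B"
proof -
  define C where "C g = max 0 (SOME C. AE x in M. norm (a g x) \<le> C)" for g
  have C0: "0 \<le> C g" for g unfolding C_def by simp
  have CAE: "AE x in M. norm (a g x) \<le> C g" if "g \<in> F" for g
  proof -
    have "\<exists>C. AE x in M. norm (a g x) \<le> C" using Linf[OF that] unfolding Linfty_def by blast
    then have "AE x in M. norm (a g x) \<le> (SOME C. AE x in M. norm (a g x) \<le> C)" by (rule someI_ex)
    then show ?thesis unfolding C_def by eventually_elim simp
  qed
  define Cs where "Cs = (\<Sum>g\<in>F. C g)"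
  have Cs0: "0 \<le> Cs" unfolding Cs_def using C0 by (simp add: sum_nonneg)
  define K where "K = Cs powr p * real (card F)"
  have K0: "0 \<le> K" unfolding K_def by simp
  have main: "lpD_norm M p (Phi \<alpha> F a \<xi>) \<le> K powr (1 / p)"
    if \<xi>: "mem_lpD M p \<xi>" "lpD_norm M p \<xi> \<le> 1" for \<xi>
  proof -
    define Lk where "Lk k = Lp_norm M p (\<xi> k) powr p" for k
    have Lk0: "0 \<le> Lk k" for k unfolding Lk_def by simp
    have memk: "memLp M p (\<xi> k)" for k using \<xi>(1) unfolding mem_lpD_def by simp
    have intk: "integrable M (\<lambda>x. norm (\<xi> k x) powr p)" for k using memk unfolding memLp_def by simp
    have Lk_int: "Lk k = (\<integral>x. norm (\<xi> k x) powr p \<partial>M)" for k unfolding Lk_def by (rule Lp_norm_powr[OF p0])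
    have Lks: "Lk summable_on UNIV" using \<xi>(1) unfolding mem_lpD_def Lk_def by simp
    have Lk1: "infsum Lk UNIV \<le> 1"
    proof (rule powr_le_one_imp[OF _ p0])
      show "0 \<le> infsum Lk UNIV" using Lk0 by (simp add: infsum_nonneg)
      show "infsum Lk UNIV powr (1 / p) \<le> 1" using \<xi>(2) unfolding lpD_norm_def Lk_def .
    qed
    define L' where "L' h = Lp_norm M p (Phi \<alpha> F a \<xi> h) powr p" for h
    have L'0: "0 \<le> L' h" for h unfolding L'_def by simp
    have Lh: "L' h \<le> Cs powr p * (\<Sum>g\<in>F. Lk (h + g))" for h
    proof (cases "F = {}")
      case True
      then have "Phi \<alpha> F a \<xi> h = (\<lambda>x. 0)" unfolding Phi_eq[abs_def] by simp
      then show ?thesis unfolding L'_def using True Lp_norm_zero[OF p0] p0 by simp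
    next
      case Fne: False
      have AEa: "AE x in M. \<forall>g\<in>F. norm (a g (\<alpha> (- h) x)) \<le> C g"
        using finF by (subst AE_finite_all) (auto intro!: AE_transport CAE)
      have pw: "AE x in M. norm (Phi \<alpha> F a \<xi> h x) powr p \<le> Cs powr p * (\<Sum>g\<in>F. norm (\<xi> (h + g) x) powr p)"
        using AEa
      proof eventually_elim
        case (elim x)
        define n where "n g = norm (\<xi> (h + g) x)" for g
        have n0: "0 \<le> n g" for g unfolding n_def by simp
        define Mx where "Mx = Max (n ` F)"
        have nM: "n g \<le> Mx" if "g \<in> F" for g unfolding Mx_def using finF that by (intro Max_ge) auto
        have Mx0: "0 \<le> Mx" using Fne nM n0 by (meson all_not_in_conv order_trans)
        have "norm (Phi \<alpha> F a \<xi> h x) \<le> (\<Sum>g\<in>F. norm (blinfun_apply (a g (\<alpha> (- h) x)) (\<xi> (h + g) x)))"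
          unfolding Phi_eq by (rule norm_sum)
        also have "\<dots> \<le> (\<Sum>g\<in>F. C g * Mx)"
        proof (rule sum_mono)
          fix g assume g: "g \<in> F"
          have "norm (blinfun_apply (a g (\<alpha> (- h) x)) (\<xi> (h + g) x)) \<le> norm (a g (\<alpha> (- h) x)) * n g"
            unfolding n_def by (rule norm_blinfun)
          also have "\<dots> \<le> C g * Mx" using elim g nM[OF g] n0 C0 by (intro mult_mono) auto
          finally show "norm (blinfun_apply (a g (\<alpha> (- h) x)) (\<xi> (h + g) x)) \<le> C g * Mx" .
        qed
        also have "\<dots> = Cs * Mx" unfolding Cs_def by (simp add: sum_distrib_right)
        finally have "norm (Phi \<alpha> F a \<xi> h x) \<le> Cs * Mx" .
        then have "norm (Phi \<alpha> F a \<xi> h x) powr p \<le> (Cs * Mx) powr p"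
          using p0 by (intro powr_mono2) auto
        also have "\<dots> = Cs powr p * Mx powr p" using Cs0 Mx0 by (simp add: powr_mult)
        also have "Mx powr p \<le> (\<Sum>g\<in>F. n g powr p)"
          unfolding Mx_def by (rule max_powr_le_sum[OF finF Fne n0 p0])
        finally show ?case unfolding n_def by (simp add: mult_left_mono)
      qed
      show ?thesis
      proof (cases "integrable M (\<lambda>x. norm (Phi \<alpha> F a \<xi> h x) powr p)")
        case True
        have "L' h = (\<integral>x. norm (Phi \<alpha> F a \<xi> h x) powr p \<partial>M)" unfolding L'_def by (rule Lp_norm_powr[OF p0])
        also have "\<dots> \<le> (\<integral>x. Cs powr p * (\<Sum>g\<in>F. norm (\<xi> (h + g) x) powr p) \<partial>M)"
          using True intk pw by (intro integral_mono_AE) auto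
        also have "\<dots> = Cs powr p * (\<Sum>g\<in>F. Lk (h + g))"
          using intk by (simp add: Lk_int integral_sum)
        finally show ?thesis .
      next
        case False
        then have "L' h = 0" unfolding L'_def Lp_norm_powr[OF p0] by (simp add: not_integrable_integral_eq)
        then show ?thesis using Cs0 Lk0 by (simp add: sum_nonneg)
      qed
    qed
    have shift: "(\<lambda>h. Lk (h + g)) summable_on UNIV \<and> infsum (\<lambda>h. Lk (h + g)) UNIV = infsum Lk UNIV" for g
      using summable_on_reindex_bij_betw[OF bij_plus_right'[of g], of Lk]
        infsum_reindex_bij_betw[OF bij_plus_right'[of g], of Lk] Lks by simp
    have fsum: "(\<lambda>h. \<Sum>g\<in>F. Lk (h + g)) summable_on UNIV \<and>
        infsum (\<lambda>h. \<Sum>g\<in>F. Lk (h + g)) UNIV = (\<Sum>g\<in>F. infsum (\<lambda>h. Lk (h + g)) UNIV)"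
      using infsum_finsum[OF finF, of "\<lambda>g h. Lk (h + g)" UNIV] shift by simp
    have "infsum L' UNIV \<le> K"
    proof (cases "L' summable_on UNIV")
      case True
      have "infsum L' UNIV \<le> infsum (\<lambda>h. Cs powr p * (\<Sum>g\<in>F. Lk (h + g))) UNIV"
        using True fsum Lh by (intro infsum_mono) (auto intro: summable_on_cmult_right)
      also have "\<dots> = Cs powr p * (\<Sum>g\<in>F. infsum (\<lambda>h. Lk (h + g)) UNIV)"
        using fsum by (simp add: infsum_cmult_right')
      also have "\<dots> = Cs powr p * (real (card F) * infsum Lk UNIV)" using shift by simp
      also have "\<dots> \<le> Cs powr p * (real (card F) * 1)"
        using Lk1 by (intro mult_left_mono) auto
      finally show ?thesis unfolding K_def by simp
    next
      case False
      then show ?thesis using K0 by (simp add: infsum_not_exists)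
    qed
    moreover have "0 \<le> infsum L' UNIV" using L'0 by (simp add: infsum_nonneg)
    ultimately have "infsum L' UNIV powr (1 / p) \<le> K powr (1 / p)"
      using p0 by (intro powr_mono2) auto
    then show ?thesis unfolding lpD_norm_def L'_def .
  qed
  then show ?thesis by blast
qed

end


lemma powr_le1_imp:
  fixes x q :: real
  assumes "0 \<le> x" "0 < q" "x powr q \<le> 1"
  shows "x \<le> 1"
proof (rule ccontr)
  assume "\<not> x \<le> 1"
  then have "1 powr q < x powr q" using assms(2) by (intro powr_less_mono2) auto
  then show False using assms(3) by simp
qed

context setting begin

lemma final_loc:
  assumes am: "amenable_group TYPE('g)"
  shows "Lp_opnorm M p (Sop M p \<alpha> F a) \<le> lpD_opnorm M p (Phi \<alpha> F a)"
proof -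
  define U where "U = {\<xi> :: 'g \<Rightarrow> 'x \<Rightarrow> 'e. mem_lpD M p \<xi> \<and> lpD_norm M p \<xi> \<le> 1}"
  define R where "R = lpD_opnorm M p (Phi \<alpha> F a)"
  have R_def': "R = (SUP \<xi>\<in>U. lpD_norm M p (Phi \<alpha> F a \<xi>))" unfolding R_def lpD_opnorm_def U_def ..
  obtain B where B: "\<And>\<xi>. \<xi> \<in> U \<Longrightarrow> lpD_norm M p (Phi \<alpha> F a \<xi>) \<le> B"
    using Phi_bdd unfolding U_def by blast
  have bdd: "bdd_above ((\<lambda>\<xi>. lpD_norm M p (Phi \<alpha> F a \<xi>)) ` U)"
    using B by (intro bdd_aboveI[of _ B]) auto
  have upper: "lpD_norm M p (Phi \<alpha> F a \<xi>) \<le> R" if "\<xi> \<in> U" for \<xi>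
    unfolding R_def' using bdd that by (rule cSUP_upper2) simp
  define \<xi>0 where "\<xi>0 = (\<lambda>(g::'g) (x::'x). 0::'e)"
  have L00: "Lp_norm M p (\<xi>0 g) = 0" for g unfolding \<xi>0_def Lp_norm_def using p0 by simp
  have L0': "Lp_norm M p (\<lambda>x::'x. 0::'e) = 0" unfolding Lp_norm_def using p0 by simp
  have \<xi>0U: "\<xi>0 \<in> U"
    unfolding U_def mem_lpD_def lpD_norm_def \<xi>0_def using p0 L0' by (simp add: memLp_def)
  have R0: "0 \<le> R" using upper[OF \<xi>0U] lpD_norm_nonneg[of M p "Phi \<alpha> F a \<xi>0"] by linarith
  have each: "Lp_norm M p (Sop M p \<alpha> F a f) \<le> R" if f: "memLp M p f" "Lp_norm M p f \<le> 1" for f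
  proof -
    define I0 where "I0 = (\<integral>x. norm (Sop M p \<alpha> F a f x) powr p \<partial>M)"
    have I00: "0 \<le> I0" unfolding I0_def by (intro Bochner_Integration.integral_nonneg) auto
    have Lp_eq: "Lp_norm M p (Sop M p \<alpha> F a f) = I0 powr (1 / p)" unfolding Lp_norm_def I0_def ..
    show ?thesis
    proof (cases "integrable M (\<lambda>x. norm (Sop M p \<alpha> F a f x) powr p)")
      case False
      then have "I0 = 0" unfolding I0_def by (simp add: not_integrable_integral_eq)
      then show ?thesis using Lp_eq R0 by simp
    next
      case Nint: True
      have fint: "(\<integral>x. norm (f x) powr p \<partial>M) \<le> 1"
      proof (rule powr_le1_imp)
        show "0 \<le> (\<integral>x. norm (f x) powr p \<partial>M)" by (intro Bochner_Integration.integral_nonneg) auto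
        show "0 < 1 / p" using p0 by simp
        show "(\<integral>x. norm (f x) powr p \<partial>M) powr (1 / p) \<le> 1" using f(2) unfolding Lp_norm_def .
      qed
      have key: "(1 - e) * I0 \<le> R powr p" if e: "0 < e" for e
      proof -
        obtain S where S: "finite S" "S \<noteq> {}"
          and Sf: "(1 - e) * real (card S) \<le> real (card {h\<in>S. \<forall>g\<in>F. h + g \<in> S})"
          using folner[OF am finF e] by blast
        obtain Z where Z: "Z \<in> null_sets M"
          and low: "(1 - e) * I0 \<le> lpD_norm M p (Phi \<alpha> F a (xi M p \<alpha> S Z f)) powr p"
          using lower_e[OF f(1) Nint S Sf] unfolding I0_def by blast
        have "xi M p \<alpha> S Z f \<in> U"
        proof -
          have m: "mem_lpD M p (xi M p \<alpha> S Z f)" by (rule xi_lpD(1)[OF f(1) Z S])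
          have "lpD_norm M p (xi M p \<alpha> S Z f) powr p \<le> 1" using xi_lpD(2)[OF f(1) Z S] fint by simp
          then have "lpD_norm M p (xi M p \<alpha> S Z f) \<le> 1"
            using powr_le1_imp[OF lpD_norm_nonneg p0] by blast
          then show ?thesis using m unfolding U_def by blast
        qed
        from upper[OF this]
        have "lpD_norm M p (Phi \<alpha> F a (xi M p \<alpha> S Z f)) powr p \<le> R powr p"
          using p0 lpD_norm_nonneg by (intro powr_mono2) auto
        then show ?thesis using low by linarith
      qed
      have "I0 \<le> R powr p"
      proof (rule ccontr)
        assume "\<not> I0 \<le> R powr p"
        then have lt: "R powr p < I0" by simp
        have Rp0: "0 \<le> R powr p" by simp
        define e where "e = (I0 - R powr p) / (2 * I0)"
        have I0pos: "0 < I0" using lt Rp0 by linarith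
        have e0: "0 < e" unfolding e_def using lt I0pos by simp
        have eq: "(1 - e) * I0 = (I0 + R powr p) / 2" unfolding e_def using I0pos
          by (simp add: field_simps)
        have "R powr p < (I0 + R powr p) / 2" using lt by (simp add: field_simps)
        then have "R powr p < (1 - e) * I0" unfolding eq .
        then show False using key[OF e0] by linarith
      qed
      then have "I0 powr (1 / p) \<le> (R powr p) powr (1 / p)" using I00 p0 by (intro powr_mono2) auto
      also have "(R powr p) powr (1 / p) = R" using R0 p0 by (simp add: powr_powr)
      finally show ?thesis using Lp_eq by simp
    qed
  qed
  have ne: "{f :: 'x \<Rightarrow> 'e. memLp M p f \<and> Lp_norm M p f \<le> 1} \<noteq> {}"
  proof -
    have "memLp M p (\<lambda>x. 0::'e)" unfolding memLp_def using p0 by simp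
    moreover have "Lp_norm M p (\<lambda>x. 0::'e) \<le> 1" unfolding Lp_norm_def using p0 by simp
    ultimately show ?thesis by blast
  qed
  show ?thesis unfolding Lp_opnorm_def R_def[symmetric]
  proof (rule cSUP_least[OF ne])
    fix f :: "'x \<Rightarrow> 'e" assume "f \<in> {f. memLp M p f \<and> Lp_norm M p f \<le> 1}"
    then show "Lp_norm M p (Sop M p \<alpha> F a f) \<le> R" using each by blast
  qed
qed

end

theorem lemma3p3:
  fixes M :: "'x measure" and p :: real
    and \<alpha> :: "'g::group_add \<Rightarrow> 'x \<Rightarrow> 'x"
    and F :: "'g set" and a :: "'g \<Rightarrow> 'x \<Rightarrow> ('e::banach \<Rightarrow>\<^sub>L 'e)"
  assumes "sigma_finite_measure M"
    and "1 < p"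
    and "\<And>g. \<alpha> g \<in> measurable M M"
    and "\<And>g h x. x \<in> space M \<Longrightarrow> \<alpha> (g + h) x = \<alpha> g (\<alpha> h x)"
    and "\<And>x. x \<in> space M \<Longrightarrow> \<alpha> 0 x = x"
    and "\<And>g N. N \<in> null_sets M \<Longrightarrow> \<alpha> g -` N \<inter> space M \<in> null_sets M"
    and "amenable_group TYPE('g)"
    and "finite F"
    and "\<And>g. g \<in> F \<Longrightarrow> Linfty M (a g)"
  shows "Lp_opnorm M p (\<lambda>f x. \<Sum>g\<in>F. Mop (a g) (Top M p \<alpha> g f) x)
         \<le> lpD_opnorm M p (\<lambda>\<xi> h x. \<Sum>g\<in>F. bar_op \<alpha> (a g) (Vop g \<xi>) h x)"
proof -
  interpret setting M \<alpha> p F a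
  proof unfold_locales
    show "\<exists>A. countable A \<and> A \<subseteq> sets M \<and> \<Union> A = space M \<and> (\<forall>a\<in>A. emeasure M a \<noteq> \<infinity>)"
      by (rule sigma_finite_measure.sigma_finite_countable[OF assms(1)])
  qed (rule assms; assumption)+
  have e1: "(\<lambda>f x. \<Sum>g\<in>F. Mop (a g) (Top M p \<alpha> g f) x) = Sop M p \<alpha> F a"
    by (intro ext) (simp add: Sop_def)
  have e2: "(\<lambda>\<xi> h x. \<Sum>g\<in>F. bar_op \<alpha> (a g) (Vop g \<xi>) h x) = Phi \<alpha> F a"
    by (intro ext) (simp add: Phi_def)
  show ?thesis unfolding e1 e2 by (rule final_loc[OF assms(7)])
qed


end
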